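(* Let $T\in\mathcal B(\mathcal H)$ be such that either $T$ or $T^*$ is quasitriangular. Let $\{P_n\}$ be a filtration with $\|(I-P_n)TP_n\|\to0$ in the first case and with $\|(I-P_n)T^*P_n\|\to0$ in the second case, and put $T_n=P_nT|_{P_n\mathcal H}$. Then $\Psi_{T_n}\to\Psi_T$ uniformly on $\mathbb C$.
   Context: $\mathcal H$ is a complex separable Hilbert space. For an operator $A$, $\Psi_A(z)=0$ for $z\in\sigma(A)$ and $\Psi_A(z)=\|(A-z)^{-1}\|^{-1}$ otherwise. A filtration is a sequence $\{P_n\}$ of finite-rank orthogonal projections with $\operatorname{Ran}P_n\subseteq\operatorname{Ran}P_{n+1}$ and $\bigcup_n\operatorname{Ran}P_n$ dense. $T$ is quasitriangular if there is a filtration $\{P_n\}$ with $\|(I-P_n)TP_n\|\to0$. *)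

theory Defs
  imports "HOL-Analysis.Analysis"
begin

class complex_vector = real_vector +
  fixes scaleC :: "complex \<Rightarrow> 'a \<Rightarrow> 'a" (infixr "*\<^sub>C" 75)
  assumes scaleC_add_right: "c *\<^sub>C (x + y) = c *\<^sub>C x + c *\<^sub>C y"
    and scaleC_add_left: "(c + d) *\<^sub>C x = c *\<^sub>C x + d *\<^sub>C x"
    and scaleC_scaleC: "c *\<^sub>C (d *\<^sub>C x) = (c * d) *\<^sub>C x"
    and scaleC_one: "1 *\<^sub>C x = x"
    and scaleR_scaleC: "r *\<^sub>R x = complex_of_real r *\<^sub>C x"

class complex_inner = complex_vector + real_normed_vector +
  fixes cinner :: "'a \<Rightarrow> 'a \<Rightarrow> complex"
  assumes cinner_commute: "cinner x y = cnj (cinner y x)"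
    and cinner_add_left: "cinner (x + y) z = cinner x z + cinner y z"
    and cinner_scaleC_left: "cinner (c *\<^sub>C x) y = cnj c * cinner x y"
    and cinner_self_norm: "cinner x x = complex_of_real ((norm x)\<^sup>2)"

class chilbert_space = complex_inner + complete_space

definition separable_space :: "'a::topological_space itself \<Rightarrow> bool" where
  "separable_space _ \<longleftrightarrow> (\<exists>D::'a set. countable D \<and> closure D = UNIV)"

definition bounded_clinear :: "('a::complex_inner \<Rightarrow> 'b::complex_inner) \<Rightarrow> bool" where
  "bounded_clinear f \<longleftrightarrow> bounded_linear f \<and> (\<forall>c x. f (c *\<^sub>C x) = c *\<^sub>C f x)"

definition cspan :: "'a::complex_vector set \<Rightarrow> 'a set" where
  "cspan F = {x. \<exists>c. x = (\<Sum>v\<in>F. c v *\<^sub>C v)}"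

definition adj :: "('a::complex_inner \<Rightarrow> 'a) \<Rightarrow> 'a \<Rightarrow> 'a" where
  "adj T y = (THE z. \<forall>x. cinner (T x) y = cinner x z)"

definition is_orth_proj :: "('a::complex_inner \<Rightarrow> 'a) \<Rightarrow> bool" where
  "is_orth_proj P \<longleftrightarrow> bounded_clinear P \<and> (\<forall>x. P (P x) = P x)
      \<and> (\<forall>x y. cinner (P x) y = cinner x (P y))"

definition finite_rank :: "('a::complex_inner \<Rightarrow> 'a) \<Rightarrow> bool" where
  "finite_rank P \<longleftrightarrow> (\<exists>F. finite F \<and> range P \<subseteq> cspan F)"

definition filtration :: "(nat \<Rightarrow> 'a::complex_inner \<Rightarrow> 'a) \<Rightarrow> bool" where
  "filtration P \<longleftrightarrow> (\<forall>n. is_orth_proj (P n) \<and> finite_rank (P n))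
      \<and> (\<forall>n. range (P n) \<subseteq> range (P (Suc n)))
      \<and> closure (\<Union>n. range (P n)) = UNIV"

definition offdiag :: "('a::complex_inner \<Rightarrow> 'a) \<Rightarrow> ('a \<Rightarrow> 'a) \<Rightarrow> 'a \<Rightarrow> 'a" where
  "offdiag P T = (\<lambda>x. T (P x) - P (T (P x)))"

definition quasitriangular :: "('a::complex_inner \<Rightarrow> 'a) \<Rightarrow> bool" where
  "quasitriangular T \<longleftrightarrow>
     (\<exists>P. filtration P \<and> (\<lambda>n. onorm (offdiag (P n) T)) \<longlonglongrightarrow> 0)"

definition resolvent_on :: "'a::complex_inner set \<Rightarrow> ('a \<Rightarrow> 'a) \<Rightarrow> complex \<Rightarrow> ('a \<Rightarrow> 'a) \<Rightarrow> bool" where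
  "resolvent_on M A z B \<longleftrightarrow>
     (\<forall>x\<in>M. B x \<in> M \<and> B (A x - z *\<^sub>C x) = x \<and> A (B x) - z *\<^sub>C B x = x)
     \<and> (\<forall>x\<in>M. \<forall>y\<in>M. \<forall>c. B (x + y) = B x + B y \<and> B (c *\<^sub>C x) = c *\<^sub>C B x)
     \<and> (\<exists>K. \<forall>x\<in>M. norm (B x) \<le> K * norm x)"

definition spectrum_on :: "'a::complex_inner set \<Rightarrow> ('a \<Rightarrow> 'a) \<Rightarrow> complex set" where
  "spectrum_on M A = {z. \<not> (\<exists>B. resolvent_on M A z B)}"

definition opnorm_on :: "'a::complex_inner set \<Rightarrow> ('a \<Rightarrow> 'a) \<Rightarrow> real" where
  "opnorm_on M B = (SUP x\<in>M - {0}. norm (B x) / norm x)"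

definition Psi_on :: "'a::complex_inner set \<Rightarrow> ('a \<Rightarrow> 'a) \<Rightarrow> complex \<Rightarrow> real" where
  "Psi_on M A z = (if z \<in> spectrum_on M A then 0
      else inverse (opnorm_on M (SOME B. resolvent_on M A z B)))"

abbreviation Psi :: "('a::complex_inner \<Rightarrow> 'a) \<Rightarrow> complex \<Rightarrow> real" where
  "Psi A \<equiv> Psi_on UNIV A"

end

theory Submission
  imports Defs
begin


lemma scaleC_zero_right[simp]: "c *\<^sub>C (0::'a::complex_vector) = 0"
proof -
  have "c *\<^sub>C (0::'a) + c *\<^sub>C 0 = c *\<^sub>C 0 + 0" by (simp flip: scaleC_add_right)
  then show ?thesis by (rule add_left_imp_eq)
qed

lemma scaleC_zero_left[simp]: "0 *\<^sub>C (x::'a::complex_vector) = 0"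
proof -
  have "0 *\<^sub>C x + 0 *\<^sub>C x = 0 *\<^sub>C x + 0" by (simp flip: scaleC_add_left)
  then show ?thesis by (rule add_left_imp_eq)
qed

lemma scaleC_minus_right: "c *\<^sub>C (- (x::'a::complex_vector)) = - (c *\<^sub>C x)"
proof -
  have "c *\<^sub>C (- x) + c *\<^sub>C x = 0" by (simp flip: scaleC_add_right)
  then show ?thesis by (simp add: eq_neg_iff_add_eq_0)
qed

lemma scaleC_diff_right: "c *\<^sub>C ((x::'a::complex_vector) - y) = c *\<^sub>C x - c *\<^sub>C y"
  unfolding diff_conv_add_uminus by (simp only: scaleC_add_right scaleC_minus_right)

lemma scaleC_minus_left: "(- c) *\<^sub>C (x::'a::complex_vector) = - (c *\<^sub>C x)"
proof -
  have "(- c) *\<^sub>C x + c *\<^sub>C x = 0" by (simp flip: scaleC_add_left)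
  then show ?thesis by (simp add: eq_neg_iff_add_eq_0)
qed

lemma scaleC_diff_left: "(c - d) *\<^sub>C (x::'a::complex_vector) = c *\<^sub>C x - d *\<^sub>C x"
  unfolding diff_conv_add_uminus by (simp only: scaleC_add_left scaleC_minus_left)

lemma scaleC_of_real: "complex_of_real r *\<^sub>C (x::'a::complex_vector) = r *\<^sub>R x"
  by (simp add: scaleR_scaleC)



lemma cinner_add_right: "cinner x (y + z) = cinner x y + cinner (x::'a::complex_inner) z"
  by (subst (1 2 3) cinner_commute) (simp add: cinner_add_left)

lemma cinner_scaleC_right: "cinner x (c *\<^sub>C y) = c * cinner (x::'a::complex_inner) y"
  by (subst (1 2) cinner_commute) (simp add: cinner_scaleC_left)

lemma cinner_zero_left[simp]: "cinner 0 (x::'a::complex_inner) = 0"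
  using cinner_scaleC_left[of 0 x x] by simp

lemma cinner_zero_right[simp]: "cinner x (0::'a::complex_inner) = 0"
  using cinner_scaleC_right[of x 0 x] by simp

lemma cinner_minus_left: "cinner (- x) (y::'a::complex_inner) = - cinner x y"
proof -
  have "cinner (- x) y + cinner x y = 0" by (simp flip: cinner_add_left)
  then show ?thesis by (simp add: eq_neg_iff_add_eq_0)
qed

lemma cinner_minus_right: "cinner x (- y::'a::complex_inner) = - cinner x y"
proof -
  have "cinner x (- y) + cinner x y = 0" by (simp flip: cinner_add_right)
  then show ?thesis by (simp add: eq_neg_iff_add_eq_0)
qed

lemma cinner_diff_left: "cinner (x - y) (z::'a::complex_inner) = cinner x z - cinner y z"
  unfolding diff_conv_add_uminus by (simp only: cinner_add_left cinner_minus_left)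

lemma cinner_diff_right: "cinner x (y - z::'a::complex_inner) = cinner x y - cinner x z"
  unfolding diff_conv_add_uminus by (simp only: cinner_add_right cinner_minus_right)


lemma cinner_scaleR_left: "cinner (r *\<^sub>R x) (y::'a::complex_inner) = complex_of_real r * cinner x y"
  by (simp add: scaleR_scaleC cinner_scaleC_left)

lemma cinner_scaleR_right: "cinner x (r *\<^sub>R y::'a::complex_inner) = complex_of_real r * cinner x y"
  by (simp add: scaleR_scaleC cinner_scaleC_right)

lemma Re_cinner_self: "Re (cinner x (x::'a::complex_inner)) = (norm x)^2"
  by (simp add: cinner_self_norm)

lemma cinner_self_real: "cinner x (x::'a::complex_inner) = complex_of_real ((norm x)^2)"
  by (simp add: cinner_self_norm)

lemma norm_scaleC: "norm (c *\<^sub>C (x::'a::complex_inner)) = cmod c * norm x"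
proof -
  have "(norm (c *\<^sub>C x))^2 = Re (cinner (c *\<^sub>C x) (c *\<^sub>C x))" by (simp only: Re_cinner_self)
  also have "\<dots> = Re (cnj c * c) * (norm x)^2"
    by (simp only: cinner_scaleC_left cinner_scaleC_right mult.assoc) (simp add: cinner_self_real algebra_simps)
  also have "Re (cnj c * c) = (cmod c)^2"
    by (simp add: cmod_def power2_eq_square)
  finally have "(norm (c *\<^sub>C x))^2 = ((cmod c) * norm x)^2"
    by (simp add: power_mult_distrib)
  then show ?thesis
    by (simp add: power2_eq_iff_nonneg)
qed

lemma norm_add_sq: "(norm (x + y::'a::complex_inner))^2 = (norm x)^2 + (norm y)^2 + 2 * Re (cinner x y)"
proof -
  have "(norm (x+y))^2 = Re (cinner (x+y) (x+y))" by (simp only: Re_cinner_self)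
  also have "\<dots> = Re (cinner x x) + Re (cinner y y) + Re (cinner x y) + Re (cinner y x)"
    by (simp add: cinner_add_left cinner_add_right)
  also have "Re (cinner y x) = Re (cinner x y)" by (subst cinner_commute) simp
  finally show ?thesis by (simp add: Re_cinner_self)
qed

lemma norm_diff_sq: "(norm (x - y::'a::complex_inner))^2 = (norm x)^2 + (norm y)^2 - 2 * Re (cinner x y)"
  using norm_add_sq[of x "-y"] by (simp add: cinner_minus_right)

lemma cinner_Cauchy_Schwarz: "cmod (cinner x y) \<le> norm x * norm (y::'a::complex_inner)"
proof (cases "y = 0")
  case True then show ?thesis by simp
next
  case False
  define a where "a = cinner x y"
  define n where "n = (norm y)^2"
  have n: "n > 0" using False by (simp add: n_def)
  define t where "t = cnj a / complex_of_real n"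
  have "0 \<le> (norm (x - t *\<^sub>C y))^2" by simp
  also have "\<dots> = (norm x)^2 + (cmod t)^2 * n - 2 * Re (t * a)"
    by (simp add: norm_diff_sq norm_scaleC cinner_scaleC_right power_mult_distrib a_def n_def)
  also have "t * a = complex_of_real ((cmod a)^2 / n)"
  proof -
    have e: "cnj a * a = complex_of_real ((cmod a)^2)"
      using complex_norm_square[of a] by (simp only: mult.commute)
    show ?thesis unfolding t_def using e by (metis of_real_divide times_divide_eq_left)
  qed
  also have "(cmod t)^2 * n = (cmod a)^2 / n"
    unfolding t_def using n by (simp add: norm_divide power_divide complex_mod_cnj power2_eq_square)
  finally have "(cmod a)^2 / n \<le> (norm x)^2" by simp
  then have "(cmod a)^2 \<le> (norm x * norm y)^2"
    using n by (simp add: field_simps power_mult_distrib n_def)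
  then show ?thesis
    unfolding a_def by (rule power2_le_imp_le) simp
qed

lemma scaleR_scaleC_comm: "r *\<^sub>R (c *\<^sub>C (x::'a::complex_vector)) = c *\<^sub>C (r *\<^sub>R x)"
  by (simp add: scaleR_scaleC scaleC_scaleC mult.commute)

lemma bounded_linear_scaleC: "bounded_linear (\<lambda>x::'a::complex_inner. c *\<^sub>C x)"
  by (rule bounded_linear_intro[where K="cmod c"])
     (simp_all add: scaleC_add_right scaleR_scaleC_comm norm_scaleC mult.commute)


section \<open>Orthogonal projections\<close>

context
  fixes P :: "'a::complex_inner \<Rightarrow> 'a"
  assumes op: "is_orth_proj P"
begin

lemma op_bl: "bounded_linear P"
  using op unfolding is_orth_proj_def bounded_clinear_def by blast

lemma op_scaleC: "P (c *\<^sub>C x) = c *\<^sub>C P x"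
  using op unfolding is_orth_proj_def bounded_clinear_def by blast

lemma op_idem: "P (P x) = P x"
  using op unfolding is_orth_proj_def by blast

lemma op_sa: "cinner (P x) y = cinner x (P y)"
  using op unfolding is_orth_proj_def by blast

lemma op_add: "P (x + y) = P x + P y"
  using op_bl by (rule linear_simps)

lemma op_diff: "P (x - y) = P x - P y"
  using op_bl by (rule linear_simps)

lemma op_zero: "P 0 = 0"
  using op_bl by (rule linear_simps)

lemma op_range: "x \<in> range P \<longleftrightarrow> P x = x"
proof
  assume "x \<in> range P" then obtain y where "x = P y" by blast
  then show "P x = x" by (simp add: op_idem)
next
  assume "P x = x" then show "x \<in> range P" by (metis rangeI)
qed

lemma op_orth: "cinner (P x) (y - P y) = 0"
  by (simp add: cinner_diff_right op_sa[of x "P y"] op_idem op_sa[of x y])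

lemma op_orth': "cinner (y - P y) (P x) = 0"
  by (subst cinner_commute) (simp add: op_orth)

lemma op_pyth: "(norm x)^2 = (norm (P x))^2 + (norm (x - P x))^2"
proof -
  have "(norm x)^2 = (norm (P x + (x - P x)))^2" by simp
  also have "\<dots> = (norm (P x))^2 + (norm (x - P x))^2"
    by (simp only: norm_add_sq op_orth) simp
  finally show ?thesis .
qed

lemma op_norm_le: "norm (P x) \<le> norm x"
proof -
  have "(norm (P x))^2 \<le> (norm x)^2" using op_pyth[of x] by simp
  then show ?thesis by (rule power2_le_imp_le) simp
qed

lemma op_best: assumes "v \<in> range P" shows "norm (x - P x) \<le> norm (x - v)"
proof -
  have pv: "P v = v" using assms op_range by blast
  have e: "x - v = (x - P x) + P (x - v)" by (simp add: op_diff op_idem pv)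
  have "(norm (x - v))^2 = (norm (x - P x))^2 + (norm (P (x - v)))^2"
    by (subst e, simp only: norm_add_sq op_orth') simp
  then have "(norm (x - P x))^2 \<le> (norm (x - v))^2" by simp
  then show ?thesis by (rule power2_le_imp_le) simp
qed

lemma op_closed_range: "closed (range P)"
proof -
  have "range P = {x. P x = x}" using op_range by blast
  moreover have "closed {x. P x = x}"
    by (intro closed_Collect_eq continuous_on_id linear_continuous_on op_bl)
  ultimately show ?thesis by simp
qed

end

section \<open>Filtrations\<close>

context
  fixes P :: "nat \<Rightarrow> 'a::complex_inner \<Rightarrow> 'a"
  assumes filt: "filtration P"
begin

lemma filt_op: "is_orth_proj (P n)"
  using filt unfolding filtration_def by blast

lemma filt_fr: "finite_rank (P n)"
  using filt unfolding filtration_def by blast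

lemma filt_mono: assumes "m \<le> n" shows "range (P m) \<subseteq> range (P n)"
  using lift_Suc_mono_le[of "\<lambda>n. range (P n)", OF _ assms] filt unfolding filtration_def by blast

lemma filt_conv: "(\<lambda>n. P n x) \<longlonglongrightarrow> x"
proof (rule LIMSEQ_I)
  fix e :: real assume e: "e > 0"
  have "x \<in> closure (\<Union>n. range (P n))" using filt unfolding filtration_def by blast
  then obtain v where v: "v \<in> (\<Union>n. range (P n))" "dist v x < e"
    using e closure_approachable by blast
  then obtain m where m: "v \<in> range (P m)" by blast
  show "\<exists>N. \<forall>n\<ge>N. norm (P n x - x) < e"
  proof (intro exI allI impI)
    fix n assume "m \<le> n"
    then have "v \<in> range (P n)" using m filt_mono by blast
    then have "norm (x - P n x) \<le> norm (x - v)" by (rule op_best[OF filt_op])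
    then show "norm (P n x - x) < e" using v(2) by (simp add: dist_norm norm_minus_commute)
  qed
qed

end

lemma offdiag_bl:
  assumes "is_orth_proj Q" "bounded_linear S"
  shows "bounded_linear (offdiag Q S)"
  unfolding offdiag_def
  by (intro bounded_linear_sub bounded_linear_compose[OF assms(2)] bounded_linear_compose[OF op_bl[OF assms(1)]] op_bl[OF assms(1)])

lemma offdiag_range:
  assumes "is_orth_proj Q" "x \<in> range Q"
  shows "offdiag Q S x = S x - Q (S x)"
  using assms by (simp add: offdiag_def op_range)

lemma offdiag_bound:
  assumes "is_orth_proj Q" "bounded_linear S" "x \<in> range Q"
  shows "norm (S x - Q (S x)) \<le> onorm (offdiag Q S) * norm x"
  using onorm[OF offdiag_bl[OF assms(1,2)], of x] offdiag_range[OF assms(1,3)] by simp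


section \<open>Finite dimensionality\<close>

lemma scaleC_decomp: "c *\<^sub>C (v::'a::complex_vector) = Re c *\<^sub>R v + Im c *\<^sub>R (\<i> *\<^sub>C v)"
proof -
  have "c = complex_of_real (Re c) + complex_of_real (Im c) * \<i>" by (simp add: complex_eq_iff)
  then have "c *\<^sub>C v = complex_of_real (Re c) *\<^sub>C v + (complex_of_real (Im c) * \<i>) *\<^sub>C v"
    by (metis scaleC_add_left)
  also have "\<dots> = Re c *\<^sub>R v + Im c *\<^sub>R (\<i> *\<^sub>C v)"
    by (simp add: scaleR_scaleC scaleC_scaleC)
  finally show ?thesis .
qed

lemma cspan_sub_span:
  "cspan F \<subseteq> span (F \<union> (\<lambda>v. \<i> *\<^sub>C v) ` F)"
proof
  fix x assume "x \<in> cspan F"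
  then obtain c where x: "x = (\<Sum>v\<in>F. c v *\<^sub>C v)" unfolding cspan_def by blast
  show "x \<in> span (F \<union> (\<lambda>v. \<i> *\<^sub>C v) ` F)"
    unfolding x
  proof (rule span_sum)
    fix v assume v: "v \<in> F"
    show "c v *\<^sub>C v \<in> span (F \<union> (\<lambda>v. \<i> *\<^sub>C v) ` F)"
      unfolding scaleC_decomp[of "c v" v]
      by (intro span_add span_scale span_base) (use v in auto)
  qed
qed

lemma op_subspace: assumes "is_orth_proj Q" shows "subspace (range Q)"
  unfolding subspace_def
  using op_range[OF assms] op_add[OF assms] op_zero[OF assms] linear_simps(5)[OF op_bl[OF assms]]
  by auto

lemma fd_surj:
  fixes Q :: "'a::complex_inner \<Rightarrow> 'a" and A :: "'a \<Rightarrow> 'a"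
  assumes op: "is_orth_proj Q" and fr: "finite_rank Q" and lin: "linear A"
    and inv: "\<And>x. x \<in> range Q \<Longrightarrow> A x \<in> range Q"
    and inj: "\<And>x. x \<in> range Q \<Longrightarrow> A x = 0 \<Longrightarrow> x = 0"
    and y: "y \<in> range Q"
  shows "\<exists>x\<in>range Q. A x = y"
proof -
  define M where "M = range Q"
  have sM: "subspace M" unfolding M_def by (rule op_subspace[OF op])
  obtain F where F: "finite F" "range Q \<subseteq> cspan F" using fr unfolding finite_rank_def by blast
  define G where "G = F \<union> (\<lambda>v. \<i> *\<^sub>C v) ` F"
  have fG: "finite G" using F(1) unfolding G_def by simp
  have MG: "M \<subseteq> span G" using F(2) cspan_sub_span[of F] unfolding M_def G_def by blast
  obtain B where B: "B \<subseteq> M" "independent B" "M \<subseteq> span B" "card B = dim M"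
    by (rule basis_exists)
  have fB: "finite B" using independent_span_bound[OF fG B(2)] B(1) MG by blast
  have spB: "span B = M" using span_minimal[OF B(1) sM] B(3) by blast
  have injM: "inj_on A M"
  proof (rule inj_onI)
    fix u v assume uv: "u \<in> M" "v \<in> M" "A u = A v"
    have "u - v \<in> M" using uv sM by (simp add: subspace_diff)
    moreover have "A (u - v) = 0" using uv(3) lin by (simp add: linear_diff)
    ultimately have "u - v = 0" using inj unfolding M_def by blast
    then show "u = v" by simp
  qed
  have indA: "independent (A ` B)"
    using linear_independent_injective_image[OF lin B(2)] injM spB by simp
  have cardA: "card (A ` B) = card B"
    using card_image[OF inj_on_subset[OF injM B(1)]] by simp
  have subA: "A ` B \<subseteq> M" using B(1) inv unfolding M_def by blast
  have "M \<subseteq> span (A ` B)"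
  proof
    fix a assume aM: "a \<in> M"
    show "a \<in> span (A ` B)"
    proof (rule ccontr)
      assume na: "a \<notin> span (A ` B)"
      have naB: "a \<notin> A ` B"
      proof
        assume "a \<in> A ` B"
        then have "a \<in> span (A ` B)" by (rule span_base)
        with na show False by contradiction
      qed
      have indS: "independent (insert a (A ` B))"
        by (rule independent_insertI[OF na indA])
      have "insert a (A ` B) \<subseteq> M" using aM subA by (rule insert_subsetI)
      then have "insert a (A ` B) \<subseteq> span B" using B(3) by (rule order_trans)
      then have "card (insert a (A ` B)) \<le> card B"
        using independent_span_bound[OF fB indS] by blast
      moreover have "card (insert a (A ` B)) = card B + 1"
        using card_insert_disjoint[OF finite_imageI[OF fB] naB] cardA by simp
      ultimately show False by simp
    qed
  qed
  also have "span (A ` B) = A ` M"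
    using linear_span_image[OF lin, of B] spB by simp
  finally have "M \<subseteq> A ` M" .
  moreover have "y \<in> M" using y by (simp add: M_def)
  ultimately have "y \<in> A ` M" by (rule subsetD)
  then obtain x where "x \<in> M" "y = A x" by (rule imageE)
  then show ?thesis unfolding M_def by blast
qed


lemma res_zero:
  assumes "resolvent_on M A z B" "x \<in> M"
  shows "B 0 = 0"
proof -
  have "B (0 *\<^sub>C x) = 0 *\<^sub>C B x" using assms unfolding resolvent_on_def by blast
  then show ?thesis by simp
qed

lemma res_bdd:
  assumes "resolvent_on M A z B"
  shows "bdd_above ((\<lambda>x. norm (B x) / norm x) ` (M - {0}))"
proof -
  obtain K where K: "\<And>x. x \<in> M \<Longrightarrow> norm (B x) \<le> K * norm x"
    using assms unfolding resolvent_on_def by blast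
  show ?thesis
  proof (rule bdd_aboveI2)
    fix x assume x: "x \<in> M - {0}"
    then have "norm x > 0" by simp
    then show "norm (B x) / norm x \<le> K" using K[of x] x by (simp add: divide_le_eq)
  qed
qed

lemma res_opnorm_upper:
  assumes "resolvent_on M A z B" "y \<in> M"
  shows "norm (B y) \<le> opnorm_on M B * norm y"
proof (cases "y = 0")
  case True
  then show ?thesis using res_zero[OF assms] by simp
next
  case False
  then have "norm (B y) / norm y \<le> opnorm_on M B"
    unfolding opnorm_on_def using assms(2) by (intro cSUP_upper res_bdd[OF assms(1)]) simp
  then show ?thesis using False by (simp add: divide_le_eq)
qed

lemma Psi_upper:
  fixes A :: "'a::complex_inner \<Rightarrow> 'a"
  assumes x: "x \<in> M" "x \<noteq> 0" and y: "A x - z *\<^sub>C x \<in> M"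
  shows "Psi_on M A z \<le> norm (A x - z *\<^sub>C x) / norm x"
proof (cases "z \<in> spectrum_on M A")
  case True
  then show ?thesis by (simp add: Psi_on_def)
next
  case False
  define B where "B = (SOME B. resolvent_on M A z B)"
  have rB: "resolvent_on M A z B"
  proof -
    have "\<exists>B. resolvent_on M A z B" using False by (simp add: spectrum_on_def)
    then show ?thesis unfolding B_def by (rule someI_ex)
  qed
  define w where "w = A x - z *\<^sub>C x"
  have Bw: "B w = x" using rB x(1) unfolding resolvent_on_def w_def by blast
  have w0: "w \<noteq> 0"
  proof
    assume "w = 0"
    then have "x = 0" using Bw res_zero[OF rB x(1)] by simp
    with x(2) show False by contradiction
  qed
  have "norm x \<le> opnorm_on M B * norm w"
    using res_opnorm_upper[OF rB y] Bw by (simp add: w_def)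
  then have le: "norm x / norm w \<le> opnorm_on M B" using w0 by (simp add: divide_le_eq)
  have pos: "norm x / norm w > 0" using w0 x(2) by simp
  have "Psi_on M A z = inverse (opnorm_on M B)"
    using False by (simp add: Psi_on_def B_def)
  also have "\<dots> \<le> inverse (norm x / norm w)"
    using le pos by (intro le_imp_inverse_le) auto
  also have "\<dots> = norm w / norm x" by simp
  finally show ?thesis by (simp add: w_def)
qed

lemma Psi_lower_bb:
  fixes A :: "'a::complex_inner \<Rightarrow> 'a"
  assumes c: "c > 0" and P: "Psi_on M A z \<ge> c"
    and x: "x \<in> M" and inv: "A x - z *\<^sub>C x \<in> M"
  shows "c * norm x \<le> norm (A x - z *\<^sub>C x)"
proof -
  have nsp: "z \<notin> spectrum_on M A"
    using c P by (auto simp: Psi_on_def)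
  define B where "B = (SOME B. resolvent_on M A z B)"
  have rB: "resolvent_on M A z B"
  proof -
    have "\<exists>B. resolvent_on M A z B" using nsp by (simp add: spectrum_on_def)
    then show ?thesis unfolding B_def by (rule someI_ex)
  qed
  have Bw: "B (A x - z *\<^sub>C x) = x" using rB x unfolding resolvent_on_def by blast
  have Pe: "Psi_on M A z = inverse (opnorm_on M B)"
    using nsp by (simp add: Psi_on_def B_def)
  have opos: "opnorm_on M B > 0"
  proof (rule ccontr)
    assume "\<not> opnorm_on M B > 0"
    then have "inverse (opnorm_on M B) \<le> 0"
      using inverse_nonpositive_iff_nonpositive[of "opnorm_on M B"] by simp
    then show False using Pe P c by linarith
  qed
  have le_c: "opnorm_on M B \<le> inverse c"
    using P Pe opos c by (metis inverse_inverse_eq le_imp_inverse_le)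
  have "norm x \<le> opnorm_on M B * norm (A x - z *\<^sub>C x)"
    using res_opnorm_upper[OF rB inv] Bw by simp
  also have "\<dots> \<le> inverse c * norm (A x - z *\<^sub>C x)"
    using le_c by (intro mult_right_mono) simp_all
  finally show ?thesis using c by (simp add: field_simps)
qed

lemma Psi_lower:
  fixes A :: "'a::complex_inner \<Rightarrow> 'a"
  assumes c: "c > 0"
    and ne: "x0 \<in> M" "x0 \<noteq> 0"
    and inv: "\<And>x. x \<in> M \<Longrightarrow> A x - z *\<^sub>C x \<in> M"
    and bb: "\<And>x. x \<in> M \<Longrightarrow> c * norm x \<le> norm (A x - z *\<^sub>C x)"
    and surj: "\<And>y. y \<in> M \<Longrightarrow> \<exists>x\<in>M. A x - z *\<^sub>C x = y"
    and Madd: "\<And>x y. x \<in> M \<Longrightarrow> y \<in> M \<Longrightarrow> x + y \<in> M"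
    and Msc: "\<And>a x. x \<in> M \<Longrightarrow> a *\<^sub>C x \<in> M"
    and Aadd: "\<And>x y. x \<in> M \<Longrightarrow> y \<in> M \<Longrightarrow> A (x + y) = A x + A y"
    and Asc: "\<And>a x. x \<in> M \<Longrightarrow> A (a *\<^sub>C x) = a *\<^sub>C A x"
  shows "Psi_on M A z \<ge> c"
proof -
  define L where "L x = A x - z *\<^sub>C x" for x
  have Lsub: "L (x - y) = L x - L y" if "x \<in> M" "y \<in> M" for x y
  proof -
    have e1: "x + (-1) *\<^sub>C y = x - y" by (simp add: scaleC_minus_left scaleC_one)
    have e2: "(-1) *\<^sub>C A y = - A y" by (simp add: scaleC_minus_left scaleC_one)
    have "A (x - y) = A (x + (-1) *\<^sub>C y)" by (simp only: e1)
    also have "\<dots> = A x + (-1) *\<^sub>C A y" using Aadd[OF that(1) Msc[of y "-1", OF that(2)]] Asc[of y "-1", OF that(2)] by simp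
    finally have "A (x - y) = A x - A y" by (simp add: e2)
    then show ?thesis unfolding L_def by (simp add: scaleC_diff_right)
  qed
  have Mdiff: "x - y \<in> M" if "x \<in> M" "y \<in> M" for x y
  proof -
    have e1: "x + (-1) *\<^sub>C y = x - y" by (simp add: scaleC_minus_left scaleC_one)
    show ?thesis using Madd[OF that(1) Msc[of y "-1", OF that(2)]] by (simp only: e1)
  qed
  have Linj: "x = y" if "x \<in> M" "y \<in> M" "L x = L y" for x y
  proof -
    have "c * norm (x - y) \<le> norm (L (x - y))" using bb[OF Mdiff[OF that(1,2)]] by (simp add: L_def)
    also have "\<dots> = 0" using Lsub[OF that(1,2)] that(3) by simp
    finally have "norm (x - y) \<le> 0" using c by (simp add: mult_le_0_iff)
    then show ?thesis by simp
  qed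
  define B where "B y = (SOME x. x \<in> M \<and> L x = y)" for y
  have B: "B y \<in> M \<and> L (B y) = y" if "y \<in> M" for y
  proof -
    have "\<exists>x. x \<in> M \<and> L x = y" using surj[OF that] unfolding L_def by blast
    then show ?thesis unfolding B_def by (rule someI_ex)
  qed
  have rB: "resolvent_on M A z B"
    unfolding resolvent_on_def
  proof (intro conjI ballI allI)
    fix x assume x: "x \<in> M"
    show "B x \<in> M" using B[OF x] by blast
    show "A (B x) - z *\<^sub>C B x = x" using B[OF x] by (simp add: L_def)
    have "L x \<in> M" using inv[OF x] by (simp add: L_def)
    then have "B (L x) \<in> M" "L (B (L x)) = L x" using B by blast+
    then show "B (A x - z *\<^sub>C x) = x" using Linj x by (simp add: L_def)
  next
    fix x y c assume x: "x \<in> M" and y: "y \<in> M"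
    have "L (B x + B y) = (A (B x) - z *\<^sub>C B x) + (A (B y) - z *\<^sub>C B y)"
      using B[OF x] B[OF y] Aadd unfolding L_def by (simp add: scaleC_add_right algebra_simps)
    then have Lxy: "L (B x + B y) = L (B x) + L (B y)" by (simp add: L_def)
    show "B (x + y) = B x + B y"
      using B[OF Madd[OF x y]] B[OF x] B[OF y] Lxy Linj Madd by metis
    have BxM: "B x \<in> M" using B[OF x] by blast
    have "L (c *\<^sub>C B x) = c *\<^sub>C (A (B x) - z *\<^sub>C B x)"
      unfolding L_def using Asc[OF BxM] by (simp add: scaleC_diff_right scaleC_scaleC mult.commute)
    then have Lc: "L (c *\<^sub>C B x) = c *\<^sub>C L (B x)" by (simp add: L_def)
    show "B (c *\<^sub>C x) = c *\<^sub>C B x"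
      using B[OF Msc[OF x]] B[OF x] Lc Linj Msc by metis
  next
    show "\<exists>K. \<forall>x\<in>M. norm (B x) \<le> K * norm x"
    proof (intro exI ballI)
      fix x assume x: "x \<in> M"
      have "c * norm (B x) \<le> norm x" using bb[of "B x"] B[OF x] by (simp add: L_def)
      then show "norm (B x) \<le> inverse c * norm x" using c by (simp add: field_simps)
    qed
  qed
  then have nsp: "z \<notin> spectrum_on M A" unfolding spectrum_on_def by blast
  define B' where "B' = (SOME B. resolvent_on M A z B)"
  have rB': "resolvent_on M A z B'"
  proof -
    have "\<exists>B. resolvent_on M A z B" using nsp by (simp add: spectrum_on_def)
    then show ?thesis unfolding B'_def by (rule someI_ex)
  qed
  have B'b: "c * norm (B' y) \<le> norm y" if "y \<in> M" for y
  proof -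
    have "B' y \<in> M" "A (B' y) - z *\<^sub>C B' y = y" using rB' that unfolding resolvent_on_def by blast+
    then show ?thesis using bb[of "B' y"] by simp
  qed
  have le: "opnorm_on M B' \<le> inverse c"
    unfolding opnorm_on_def
  proof (rule cSUP_least)
    show "M - {0} \<noteq> {}" using ne by blast
    fix y assume y: "y \<in> M - {0}"
    have "c * norm (B' y) \<le> norm y" using B'b y by blast
    then show "norm (B' y) / norm y \<le> inverse c" using c y by (simp add: field_simps)
  qed
  have B'x0: "B' x0 \<noteq> 0"
  proof
    assume "B' x0 = 0"
    moreover have "A (B' x0) - z *\<^sub>C B' x0 = x0" using rB' ne(1) unfolding resolvent_on_def by blast
    moreover have "A 0 = 0" using Asc[of x0 0, OF ne(1)] by simp
    ultimately have "x0 = 0" by simp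
    with ne(2) show False by contradiction
  qed
  have pos: "opnorm_on M B' > 0"
  proof -
    have "0 < norm (B' x0) / norm x0" using B'x0 ne by simp
    also have "\<dots> \<le> opnorm_on M B'"
      unfolding opnorm_on_def using ne by (intro cSUP_upper res_bdd[OF rB']) simp
    finally show ?thesis .
  qed
  have "Psi_on M A z = inverse (opnorm_on M B')"
    using nsp by (simp add: Psi_on_def B'_def)
  also have "\<dots> \<ge> inverse (inverse c)"
    using le pos by (intro le_imp_inverse_le) auto
  finally show ?thesis by simp
qed

lemma Psi_nonneg:
  fixes A :: "'a::complex_inner \<Rightarrow> 'a"
  assumes ne: "x0 \<in> M" "x0 \<noteq> 0"
  shows "Psi_on M A z \<ge> 0"
proof (cases "z \<in> spectrum_on M A")
  case True
  then show ?thesis by (simp add: Psi_on_def)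
next
  case False
  define B where "B = (SOME B. resolvent_on M A z B)"
  have rB: "resolvent_on M A z B"
  proof -
    have "\<exists>B. resolvent_on M A z B" using False by (simp add: spectrum_on_def)
    then show ?thesis unfolding B_def by (rule someI_ex)
  qed
  have "0 \<le> norm (B x0) / norm x0" by simp
  also have "\<dots> \<le> opnorm_on M B"
    unfolding opnorm_on_def using ne by (intro cSUP_upper res_bdd[OF rB]) simp
  finally have "opnorm_on M B \<ge> 0" .
  then show ?thesis using False by (simp add: Psi_on_def B_def)
qed


lemma bcl_bl: "bounded_clinear S \<Longrightarrow> bounded_linear S"
  unfolding bounded_clinear_def by blast

lemma bcl_scaleC: "bounded_clinear S \<Longrightarrow> S (c *\<^sub>C x) = c *\<^sub>C S x"
  unfolding bounded_clinear_def by blast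

lemma bl_L: "bounded_linear S \<Longrightarrow> bounded_linear (\<lambda>x::'a::complex_inner. S x - w *\<^sub>C x)"
  by (intro bounded_linear_sub bounded_linear_scaleC)

lemma section_inv:
  fixes Q S :: "'a::complex_inner \<Rightarrow> 'a"
  assumes op: "is_orth_proj Q" and x: "x \<in> range Q"
  shows "Q (S x) - w *\<^sub>C x \<in> range Q"
proof -
  have "Q (Q (S x) - w *\<^sub>C x) = Q (S x) - w *\<^sub>C x"
    using x op_range[OF op] by (simp add: op_diff[OF op] op_idem[OF op] op_scaleC[OF op])
  then show ?thesis using op_range[OF op] by blast
qed

lemma section_surj:
  fixes Q S :: "'a::complex_inner \<Rightarrow> 'a"
  assumes op: "is_orth_proj Q" and fr: "finite_rank Q" and S: "bounded_clinear S"
    and c: "c > 0"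
    and bb: "\<And>x. x \<in> range Q \<Longrightarrow> c * norm x \<le> norm (Q (S x) - w *\<^sub>C x)"
    and y: "y \<in> range Q"
  shows "\<exists>x\<in>range Q. Q (S x) - w *\<^sub>C x = y"
proof (rule fd_surj[OF op fr _ _ _ y])
  have Qbl: "bounded_linear Q" by (rule op_bl[OF op])
  have Sbl: "bounded_linear S" by (rule bcl_bl[OF S])
  have QS: "bounded_linear (\<lambda>x. Q (S x))"
    using bounded_linear_compose[OF Qbl Sbl] by (simp add: o_def)
  show "linear (\<lambda>x. Q (S x) - w *\<^sub>C x)"
    using bl_L[OF QS] bounded_linear.linear by blast
  show "Q (S x) - w *\<^sub>C x \<in> range Q" if "x \<in> range Q" for x
    by (rule section_inv[OF op that])
  fix x assume x: "x \<in> range Q" and "Q (S x) - w *\<^sub>C x = 0"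
  then have "c * norm x \<le> 0" using bb[OF x] by simp
  then show "x = 0" using c by (simp add: mult_le_0_iff)
qed

lemma section_lower:
  fixes Q S :: "'a::complex_inner \<Rightarrow> 'a"
  assumes op: "is_orth_proj Q" and fr: "finite_rank Q" and S: "bounded_clinear S"
    and c: "c > 0" and ne: "x0 \<in> range Q" "x0 \<noteq> 0"
    and bb: "\<And>x. x \<in> range Q \<Longrightarrow> c * norm x \<le> norm (Q (S x) - w *\<^sub>C x)"
  shows "Psi_on (range Q) (\<lambda>x. Q (S x)) w \<ge> c"
proof (rule Psi_lower[OF c ne])
  have Qbl: "bounded_linear Q" by (rule op_bl[OF op])
  have Sbl: "bounded_linear S" by (rule bcl_bl[OF S])
  have QS: "bounded_linear (\<lambda>x. Q (S x))"
    using bounded_linear_compose[OF Qbl Sbl] by (simp add: o_def)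
  show inv: "Q (S x) - w *\<^sub>C x \<in> range Q" if "x \<in> range Q" for x
  proof -
    have "Q (Q (S x) - w *\<^sub>C x) = Q (S x) - w *\<^sub>C x"
      using that op_range[OF op] by (simp add: op_diff[OF op] op_idem[OF op] op_scaleC[OF op])
    then show ?thesis using op_range[OF op] by blast
  qed
  show "\<And>x. x \<in> range Q \<Longrightarrow> c * norm x \<le> norm (Q (S x) - w *\<^sub>C x)" by (rule bb)
  show "\<exists>x\<in>range Q. Q (S x) - w *\<^sub>C x = y" if y: "y \<in> range Q" for y
  proof (rule fd_surj[OF op fr _ inv _ y])
    show "linear (\<lambda>x. Q (S x) - w *\<^sub>C x)"
      using bl_L[OF QS] bounded_linear.linear by blast
    fix x assume x: "x \<in> range Q" and "Q (S x) - w *\<^sub>C x = 0"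
    then have "c * norm x \<le> 0" using bb[OF x] by simp
    then show "x = 0" using c by (simp add: mult_le_0_iff)
  qed
  show "x + y \<in> range Q" if "x \<in> range Q" "y \<in> range Q" for x y
    using that op_range[OF op] op_add[OF op] by simp
  show "a *\<^sub>C x \<in> range Q" if "x \<in> range Q" for a x
    using that op_range[OF op] op_scaleC[OF op] by simp
  show "Q (S (x + y)) = Q (S x) + Q (S y)" for x y
    by (simp add: linear_add[OF bounded_linear.linear[OF Sbl]] op_add[OF op])
  show "Q (S (a *\<^sub>C x)) = a *\<^sub>C Q (S x)" for a x
    by (simp add: bcl_scaleC[OF S] op_scaleC[OF op])
qed

lemma adjoint_trick:
  fixes A A' B :: "'a::complex_inner \<Rightarrow> 'a"
  assumes adj: "\<And>x y. x \<in> M \<Longrightarrow> y \<in> M \<Longrightarrow> cinner (A x) y = cinner x (A' y)"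
    and B: "\<And>w. w \<in> M \<Longrightarrow> B w \<in> M \<and> A (B w) = w \<and> norm (B w) \<le> K * norm w"
    and w: "w \<in> M" and K: "K \<ge> 0"
  shows "norm w \<le> K * norm (A' w)"
proof (cases "w = 0")
  case True then show ?thesis using K by simp
next
  case False
  have "(norm w)^2 = Re (cinner w w)" by (simp add: Re_cinner_self)
  also have "\<dots> = Re (cinner (A (B w)) w)" using B[OF w] by simp
  also have "\<dots> = Re (cinner (B w) (A' w))" using adj[of "B w" w] B[OF w] w by simp
  also have "\<dots> \<le> cmod (cinner (B w) (A' w))" by (rule complex_Re_le_cmod)
  also have "\<dots> \<le> norm (B w) * norm (A' w)" by (rule cinner_Cauchy_Schwarz)
  also have "\<dots> \<le> K * norm w * norm (A' w)" using B[OF w] by (intro mult_right_mono) auto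
  finally have "norm w * norm w \<le> (K * norm (A' w)) * norm w" by (simp add: power2_eq_square algebra_simps)
  then show ?thesis using False by simp
qed

lemma qt_lower:
  fixes S :: "'a::chilbert_space \<Rightarrow> 'a" and P :: "nat \<Rightarrow> 'a \<Rightarrow> 'a" and x0 :: 'a
  assumes S: "bounded_clinear S" and filt: "filtration P"
    and eps: "(\<lambda>n. onorm (offdiag (P n) S)) \<longlonglongrightarrow> 0"
    and c: "c > 0" and ne: "x0 \<noteq> 0"
    and bb: "\<And>x. c * norm x \<le> norm (S x - w *\<^sub>C x)"
  shows "Psi_on UNIV S w \<ge> c"
proof (rule Psi_lower[where ?x0.0=x0])
  show "0 < c" by (rule c)
  show "x0 \<in> UNIV" by simp
  show "x0 \<noteq> 0" by (rule ne)
  have Sbl: "bounded_linear S" by (rule bcl_bl[OF S])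
  define L where "L x = S x - w *\<^sub>C x" for x
  have Lbl: "bounded_linear L" unfolding L_def by (rule bl_L[OF Sbl])
  show "\<exists>x\<in>UNIV. S x - w *\<^sub>C x = y" for y
  proof -
    obtain N0 where N0': "\<forall>n\<ge>N0. norm (onorm (offdiag (P n) S) - 0) < c / 2"
      using LIMSEQ_D[OF eps, of "c/2"] c by auto
    have N0: "onorm (offdiag (P n) S) < c / 2" if "n \<ge> N0" for n
      using N0'[rule_format, OF that] abs_ge_self[of "onorm (offdiag (P n) S)"] by (simp only: diff_zero real_norm_def)
    have bbn: "c / 2 * norm x \<le> norm (P n (S x) - w *\<^sub>C x)" if n: "n \<ge> N0" and x: "x \<in> range (P n)" for n x
    proof -
      have op: "is_orth_proj (P n)" by (rule filt_op[OF filt])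
      have e: "P n (S x) - w *\<^sub>C x = (S x - w *\<^sub>C x) - (S x - P n (S x))" by simp
      have "norm (S x - P n (S x)) \<le> onorm (offdiag (P n) S) * norm x"
        by (rule offdiag_bound[OF op Sbl x])
      also have "\<dots> \<le> c / 2 * norm x" using N0[OF n] by (intro mult_right_mono) auto
      finally have "norm (S x - P n (S x)) \<le> c / 2 * norm x" .
      moreover have "norm (S x - w *\<^sub>C x) - norm (S x - P n (S x)) \<le> norm (P n (S x) - w *\<^sub>C x)"
        unfolding e by (rule norm_triangle_ineq2)
      ultimately show ?thesis using bb[of x] by simp
    qed
    have ex: "\<exists>v. v \<in> range (P n) \<and> P n (S v) - w *\<^sub>C v = P n y" if n: "n \<ge> N0" for n
    proof -
      have op: "is_orth_proj (P n)" by (rule filt_op[OF filt])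
      have "\<exists>x\<in>range (P n). P n (S x) - w *\<^sub>C x = P n y"
        by (rule section_surj[OF op filt_fr[OF filt] S _ bbn[OF n]]) (use c in simp_all)
      then show ?thesis by blast
    qed
    define v where "v n = (SOME v. v \<in> range (P (n + N0)) \<and> P (n + N0) (S v) - w *\<^sub>C v = P (n + N0) y)" for n
    have v: "v n \<in> range (P (n + N0)) \<and> P (n + N0) (S (v n)) - w *\<^sub>C v n = P (n + N0) y" for n
      unfolding v_def by (rule someI_ex) (rule ex, simp)
    have vb: "norm (v n) \<le> 2 / c * norm y" for n
    proof -
      have "c / 2 * norm (v n) \<le> norm (P (n + N0) y)" using bbn[of "n + N0" "v n"] v[of n] by simp
      also have "\<dots> \<le> norm y" by (rule op_norm_le[OF filt_op[OF filt]])
      finally show ?thesis using c by (simp add: field_simps)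
    qed
    define r where "r n = onorm (offdiag (P (n + N0)) S) * (2 / c * norm y) + norm (P (n + N0) y - y)" for n
    have r0: "r \<longlonglongrightarrow> 0"
    proof -
      have a: "(\<lambda>n. onorm (offdiag (P (n + N0)) S)) \<longlonglongrightarrow> 0"
        by (rule LIMSEQ_ignore_initial_segment[OF eps])
      have b: "(\<lambda>n. P (n + N0) y - y) \<longlonglongrightarrow> 0"
        using LIMSEQ_ignore_initial_segment[OF filt_conv[OF filt, of y], of N0] by (simp add: LIM_zero_iff)
      have "r \<longlonglongrightarrow> 0 * (2 / c * norm y) + 0"
        unfolding r_def by (intro tendsto_add tendsto_mult a tendsto_const tendsto_norm_zero b)
      then show ?thesis by simp
    qed
    have rb: "norm (L (v n) - y) \<le> r n" for n
    proof -
      have op: "is_orth_proj (P (n + N0))" by (rule filt_op[OF filt])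
      have e: "L (v n) - y = (S (v n) - P (n + N0) (S (v n))) + (P (n + N0) y - y)"
        using v[of n] unfolding L_def by (simp add: algebra_simps)
      have "norm (S (v n) - P (n + N0) (S (v n))) \<le> onorm (offdiag (P (n + N0)) S) * norm (v n)"
        using offdiag_bound[OF op Sbl] v[of n] by blast
      also have "\<dots> \<le> onorm (offdiag (P (n + N0)) S) * (2 / c * norm y)"
        using vb[of n] onorm_pos_le[OF offdiag_bl[OF op Sbl]] by (rule mult_left_mono)
      finally show ?thesis unfolding e r_def by (rule order_trans[OF norm_triangle_ineq add_right_mono])
    qed
    have Lv: "(\<lambda>n. L (v n)) \<longlonglongrightarrow> y"
    proof -
      have "(\<lambda>n. L (v n) - y) \<longlonglongrightarrow> 0"
        by (rule Lim_null_comparison[OF _ r0]) (simp add: rb)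
      then show ?thesis by (simp add: LIM_zero_iff)
    qed
    have "Cauchy v"
    proof (rule CauchyI)
      fix e :: real assume e: "e > 0"
      obtain M where M: "\<forall>m\<ge>M. \<forall>n\<ge>M. norm (L (v m) - L (v n)) < e * c"
        using CauchyD[OF LIMSEQ_imp_Cauchy[OF Lv], of "e * c"] e c by auto
      show "\<exists>M. \<forall>m\<ge>M. \<forall>n\<ge>M. norm (v m - v n) < e"
      proof (intro exI allI impI)
        fix m n assume "m \<ge> M" "n \<ge> M"
        then have "norm (L (v m) - L (v n)) < e * c" using M by blast
        moreover have "L (v m) - L (v n) = L (v m - v n)" by (simp add: linear_diff[OF bounded_linear.linear[OF Lbl]])
        moreover have "c * norm (v m - v n) \<le> norm (L (v m - v n))" using bb unfolding L_def by blast
        ultimately have "c * norm (v m - v n) < e * c" by simp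
        then show "norm (v m - v n) < e" using c by (simp add: mult.commute)
      qed
    qed
    then obtain x where x: "v \<longlonglongrightarrow> x" using Cauchy_convergent_iff convergent_def by blast
    have "(\<lambda>n. L (v n)) \<longlonglongrightarrow> L x" by (rule bounded_linear.tendsto[OF Lbl x])
    then have "L x = y" using Lv by (rule LIMSEQ_unique)
    then show ?thesis unfolding L_def by blast
  qed
qed (auto simp: bcl_scaleC[OF S] linear_add[OF bounded_linear.linear[OF bcl_bl[OF S]]] bb)


lemma cover_eventually:
  fixes K :: "'b::metric_space set"
  assumes K: "compact K" and r: "\<rho> > 0"
    and ev: "\<And>c. c \<in> K \<Longrightarrow> eventually (\<lambda>n. Q n c) F"
  shows "eventually (\<lambda>n. \<forall>z\<in>K. \<exists>c\<in>K. dist c z < \<rho> \<and> Q n c) F"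
proof -
  have cov: "K \<subseteq> (\<Union>c\<in>K. ball c \<rho>)" using r by auto
  obtain C where C: "C \<subseteq> K" "finite C" "K \<subseteq> (\<Union>c\<in>C. ball c \<rho>)"
  proof (rule compactE_image[OF K, of K "\<lambda>c. ball c \<rho>"])
    show "\<And>T. T \<in> K \<Longrightarrow> open (ball T \<rho>)" by simp
    show "K \<subseteq> (\<Union>c\<in>K. ball c \<rho>)" by (rule cov)
  qed
  have "eventually (\<lambda>n. \<forall>c\<in>C. Q n c) F"
    using C(1,2) ev by (intro eventually_ball_finite) auto
  then show ?thesis
  proof (rule eventually_mono)
    fix n assume Q: "\<forall>c\<in>C. Q n c"
    show "\<forall>z\<in>K. \<exists>c\<in>K. dist c z < \<rho> \<and> Q n c"
    proof
      fix z assume "z \<in> K"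
      then obtain c where "c \<in> C" "z \<in> ball c \<rho>" using C(3) by blast
      then show "\<exists>c\<in>K. dist c z < \<rho> \<and> Q n c" using C(1) Q by auto
    qed
  qed
qed

context
  fixes P :: "nat \<Rightarrow> 'a::complex_inner \<Rightarrow> 'a"
  assumes filt: "filtration P"
begin

lemma approx_unit:
  assumes y: "norm y = 1" and e: "e > 0"
  shows "eventually (\<lambda>n. \<exists>x\<in>range (P n). norm x = 1 \<and> norm (x - y) \<le> e) sequentially"
proof -
  have "eventually (\<lambda>n. dist (P n y) y < min (e / 2) (1 / 2)) sequentially"
    using filt_conv[OF filt, of y] e by (intro tendstoD) auto
  then show ?thesis
  proof (rule eventually_mono)
    fix n assume d: "dist (P n y) y < min (e / 2) (1 / 2)"
    define p where "p = P n y"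
    have op: "is_orth_proj (P n)" by (rule filt_op[OF filt])
    have dp: "norm (p - y) < min (e / 2) (1 / 2)" using d by (simp add: p_def dist_norm)
    have "norm y - norm (p - y) \<le> norm p" using norm_triangle_ineq2[of y "y - p"]
      by (simp add: norm_minus_commute)
    then have np: "norm p > 1 / 2" using dp y by simp
    define x where "x = (1 / norm p) *\<^sub>R p"
    have xr: "x \<in> range (P n)"
    proof -
      have "P n x = x" unfolding x_def p_def
        using linear_scale[OF bounded_linear.linear[OF op_bl[OF op]]] op_idem[OF op] by simp
      then show ?thesis using op_range[OF op] by blast
    qed
    have pn0: "norm p \<noteq> 0" using np by linarith
    have nx: "norm x = 1" using pn0 by (simp add: x_def)
    have "norm (x - p) = \<bar>1 - norm p\<bar>"
    proof -
      have "x - p = (1 / norm p - 1) *\<^sub>R p" by (simp add: x_def algebra_simps)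
      then have "norm (x - p) = \<bar>1 / norm p - 1\<bar> * norm p" by simp
      also have "\<dots> = \<bar>norm p * (1 / norm p - 1)\<bar>" by (simp add: abs_mult)
      also have "norm p * (1 / norm p - 1) = 1 - norm p" using pn0 by (simp add: right_diff_distrib)
      finally have "norm (x - p) = \<bar>1 - norm p\<bar>" .
      then show ?thesis .
    qed
    also have "\<dots> \<le> norm (p - y)"
      using norm_triangle_ineq3[of p y] y by (simp add: abs_minus_commute)
    finally have "norm (x - y) \<le> norm (p - y) + norm (p - y)"
      using norm_triangle_ineq[of "x - p" "p - y"] by simp
    then have "norm (x - y) \<le> e" using dp by simp
    then show "\<exists>x\<in>range (P n). norm x = 1 \<and> norm (x - y) \<le> e" using xr nx by blast
  qed
qed

end


context
  fixes P :: "nat \<Rightarrow> 'a::complex_inner \<Rightarrow> 'a" and S :: "'a \<Rightarrow> 'a" and x0 :: 'a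
  assumes filt: "filtration P" and Sbl: "bounded_linear S" and x0: "x0 \<noteq> 0"
begin

abbreviation "K \<equiv> onorm S"

lemma K_nonneg: "K \<ge> 0"
  by (rule onorm_pos_le[OF Sbl])

lemma Sb: "norm (S u) \<le> K * norm u"
  by (rule onorm[OF Sbl])

lemma unit_ex: "\<exists>u::'a. norm u = 1"
  using x0 by (intro exI[of _ "(1 / norm x0) *\<^sub>R x0"]) simp

lemma lip_z:
  assumes "norm u = 1"
  shows "norm (S u - z *\<^sub>C u) \<le> norm (S u - z' *\<^sub>C u) + cmod (z - z')"
proof -
  have "S u - z *\<^sub>C u = (S u - z' *\<^sub>C u) + (z' - z) *\<^sub>C u" by (simp add: scaleC_diff_left)
  then have "norm (S u - z *\<^sub>C u) \<le> norm (S u - z' *\<^sub>C u) + norm ((z' - z) *\<^sub>C u)"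
    by (metis norm_triangle_ineq)
  also have "norm ((z' - z) *\<^sub>C u) = cmod (z - z')" using assms by (simp add: norm_scaleC norm_minus_commute)
  finally show ?thesis .
qed

lemma Lz_diff:
  "norm ((S x - z *\<^sub>C x) - (S y - z *\<^sub>C y)) \<le> (K + cmod z) * norm (x - y)"
proof -
  have "(S x - z *\<^sub>C x) - (S y - z *\<^sub>C y) = S (x - y) - z *\<^sub>C (x - y)"
    by (simp add: linear_diff[OF bounded_linear.linear[OF Sbl]] scaleC_diff_right)
  also have "norm \<dots> \<le> norm (S (x - y)) + norm (z *\<^sub>C (x - y))" by (rule norm_triangle_ineq4)
  also have "\<dots> \<le> K * norm (x - y) + cmod z * norm (x - y)"
    using Sb[of "x - y"] by (simp add: norm_scaleC)
  finally show ?thesis by (simp add: algebra_simps)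
qed

lemma Pt1:
  assumes d: "\<delta> > 0"
  shows "eventually (\<lambda>n. \<exists>x\<in>range (P n). norm x = 1 \<and>
      (\<forall>(y::'a) z. norm y = 1 \<longrightarrow> dist z0 z < \<delta> / 4 \<longrightarrow> norm (S x - z *\<^sub>C x) \<le> norm (S y - z *\<^sub>C y) + \<delta>)) sequentially"
proof -
  define f where "f y = norm (S y - z0 *\<^sub>C y)" for y
  define V where "V = f ` {y. norm y = 1}"
  have Vne: "V \<noteq> {}" using unit_ex unfolding V_def by blast
  have Vbdd: "bdd_below V" unfolding V_def f_def by (rule bdd_belowI2[of _ 0]) simp
  define m where "m = Inf V"
  have mle: "m \<le> f y" if "norm y = 1" for y
    unfolding m_def using Vbdd that by (intro cInf_lower) (auto simp: V_def)
  obtain ys where ys: "norm ys = 1" "f ys < m + \<delta> / 4"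
  proof -
    have "Inf V < m + \<delta> / 4" using d by (simp add: m_def)
    then obtain v where "v \<in> V" "v < m + \<delta> / 4" using cInf_less_iff[OF Vne Vbdd] by blast
    then show ?thesis using that unfolding V_def by blast
  qed
  define a where "a = K + cmod z0 + 1"
  define \<eta> where "\<eta> = (\<delta> / 4) / a"
  have Kp: "a > 0" using K_nonneg by (simp add: a_def add_nonneg_pos)
  have eta: "\<eta> > 0" using d Kp by (simp add: \<eta>_def)
  have eta2: "(K + cmod z0) * \<eta> \<le> \<delta> / 4"
  proof -
    have "(K + cmod z0) * \<eta> \<le> a * \<eta>" using eta unfolding a_def by (intro mult_right_mono) auto
    also have "a * \<eta> = \<delta> / 4" using Kp unfolding \<eta>_def by simp
    finally show ?thesis .
  qed
  show ?thesis
    using approx_unit[OF filt ys(1) eta]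
  proof (rule eventually_mono)
    fix n assume "\<exists>x\<in>range (P n). norm x = 1 \<and> norm (x - ys) \<le> \<eta>"
    then obtain x where x: "x \<in> range (P n)" "norm x = 1" "norm (x - ys) \<le> \<eta>" by blast
    have "f x \<le> f ys + (K + cmod z0) * norm (x - ys)"
      using Lz_diff[of x z0 ys] norm_triangle_ineq2[of "S x - z0 *\<^sub>C x" "S ys - z0 *\<^sub>C ys"]
      unfolding f_def by linarith
    also have "(K + cmod z0) * norm (x - ys) \<le> (K + cmod z0) * \<eta>"
      using x(3) K_nonneg by (intro mult_left_mono) auto
    finally have fx: "f x \<le> f ys + \<delta> / 4" using eta2 by linarith
    have "\<forall>(y::'a) z. norm y = 1 \<longrightarrow> dist z0 z < \<delta> / 4 \<longrightarrow> norm (S x - z *\<^sub>C x) \<le> norm (S y - z *\<^sub>C y) + \<delta>"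
    proof (intro allI impI)
      fix y :: 'a and z :: complex assume y: "norm y = 1" and z: "dist z0 z < \<delta> / 4"
      have dz: "cmod (z - z0) < \<delta> / 4" "cmod (z0 - z) < \<delta> / 4"
        using z by (simp_all add: dist_norm norm_minus_commute)
      have "norm (S x - z *\<^sub>C x) \<le> f x + cmod (z - z0)" using lip_z[OF x(2)] unfolding f_def by blast
      moreover have "f y \<le> norm (S y - z *\<^sub>C y) + cmod (z0 - z)" using lip_z[OF y] unfolding f_def by blast
      moreover have "m \<le> f y" by (rule mle[OF y])
      ultimately show "norm (S x - z *\<^sub>C x) \<le> norm (S y - z *\<^sub>C y) + \<delta>"
        using fx ys(2) dz by linarith
    qed
    then show "\<exists>x\<in>range (P n). norm x = 1 \<and>
      (\<forall>(y::'a) z. norm y = 1 \<longrightarrow> dist z0 z < \<delta> / 4 \<longrightarrow> norm (S x - z *\<^sub>C x) \<le> norm (S y - z *\<^sub>C y) + \<delta>)"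
      using x by blast
  qed
qed


lemma Re_diff_le: "Re (u * c) - Re (v * c) \<le> cmod (u - v) * cmod c"
proof -
  have "Re (u * c) - Re (v * c) = Re ((u - v) * c)" by (simp add: left_diff_distrib)
  also have "\<dots> \<le> cmod ((u - v) * c)" by (rule complex_Re_le_cmod)
  finally show ?thesis by (simp add: norm_mult)
qed

lemma a_bound: "norm u = 1 \<Longrightarrow> cmod (cinner (S u) u) \<le> K"
  using cinner_Cauchy_Schwarz[of "S u" u] Sb[of u] by simp

lemma a_diff:
  assumes "norm x = 1" "norm y = 1"
  shows "cmod (cinner (S x) x - cinner (S y) y) \<le> 2 * K * norm (x - y)"
proof -
  have "cinner (S x) x - cinner (S y) y = cinner (S (x - y)) x + cinner (S y) (x - y)"
    by (simp add: linear_diff[OF bounded_linear.linear[OF Sbl]] cinner_diff_left cinner_diff_right)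
  then have "cmod (cinner (S x) x - cinner (S y) y) \<le> cmod (cinner (S (x - y)) x) + cmod (cinner (S y) (x - y))"
    by (metis norm_triangle_ineq)
  also have "cmod (cinner (S (x - y)) x) \<le> K * norm (x - y)"
    using cinner_Cauchy_Schwarz[of "S (x - y)" x] Sb[of "x - y"] assms by simp
  also have "cmod (cinner (S y) (x - y)) \<le> K * norm (x - y)"
    using cinner_Cauchy_Schwarz[of "S y" "x - y"] Sb[of y] assms K_nonneg
    by (metis mult.right_neutral mult_right_mono norm_ge_zero order_trans)
  finally show ?thesis by simp
qed

lemma Pt2:
  assumes w0: "cmod w0 \<le> 1" and e: "\<eta> > 0"
  shows "eventually (\<lambda>n. \<exists>x\<in>range (P n). norm x = 1 \<and>
     (\<forall>(y::'a) w. norm y = 1 \<longrightarrow> dist w0 w < \<eta> / 4 / (K + 1) \<longrightarrow>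
        Re (w * cinner (S y) y) - \<eta> \<le> Re (w * cinner (S x) x))) sequentially"
proof -
  define a where "a u = cinner (S u) u" for u
  define b where "b = K + 1"
  have b: "b > 0" "K \<le> b" using K_nonneg by (simp_all add: b_def)
  define g where "g y = Re (w0 * a y)" for y
  define V where "V = g ` {y. norm y = 1}"
  have Vne: "V \<noteq> {}" using unit_ex unfolding V_def by blast
  have gK: "g y \<le> K" if "norm y = 1" for y
  proof -
    have "g y \<le> cmod (w0 * a y)" unfolding g_def by (rule complex_Re_le_cmod)
    also have "\<dots> = cmod w0 * cmod (a y)" by (simp add: norm_mult)
    also have "\<dots> \<le> 1 * K" using w0 a_bound[OF that] unfolding a_def
      by (intro mult_mono) auto
    finally show ?thesis by simp
  qed
  have Vbdd: "bdd_above V" unfolding V_def using gK by (intro bdd_aboveI2[where M=K]) auto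
  define s where "s = Sup V"
  have sup: "g y \<le> s" if "norm y = 1" for y
    unfolding s_def using Vbdd that by (intro cSup_upper) (auto simp: V_def)
  obtain ys where ys: "norm ys = 1" "s - \<eta> / 4 < g ys"
  proof -
    have "s - \<eta> / 4 < Sup V" using e by (simp add: s_def)
    then obtain v where "v \<in> V" "s - \<eta> / 4 < v" using less_cSup_iff[OF Vne Vbdd] by blast
    then show ?thesis using that unfolding V_def by blast
  qed
  define e' where "e' = \<eta> / 8 / b"
  have e': "e' > 0" using e b by (simp add: e'_def)
  have be': "b * e' = \<eta> / 8" using b unfolding e'_def by simp
  show ?thesis
    using approx_unit[OF filt ys(1) e']
  proof (rule eventually_mono)
    fix n assume "\<exists>x\<in>range (P n). norm x = 1 \<and> norm (x - ys) \<le> e'"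
    then obtain x where x: "x \<in> range (P n)" "norm x = 1" "norm (x - ys) \<le> e'" by blast
    have "g ys - g x \<le> cmod w0 * cmod (a ys - a x)"
      unfolding g_def using Re_diff_le[of "a ys" w0 "a x"] by (simp add: mult.commute)
    also have "\<dots> \<le> 1 * (2 * K * norm (ys - x))"
      using w0 a_diff[OF ys(1) x(2)] unfolding a_def by (intro mult_mono) auto
    also have "\<dots> \<le> 2 * b * e'"
      using x(3) b K_nonneg by (simp add: norm_minus_commute) (intro mult_mono, auto)
    finally have gx: "g ys - \<eta> / 4 \<le> g x" using be' by simp
    have "\<forall>(y::'a) w. norm y = 1 \<longrightarrow> dist w0 w < \<eta> / 4 / (K + 1) \<longrightarrow>
        Re (w * a y) - \<eta> \<le> Re (w * a x)"
    proof (intro allI impI)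
      fix y :: 'a and w :: complex assume y: "norm y = 1" and dw: "dist w0 w < \<eta> / 4 / (K + 1)"
      have dw': "cmod (w - w0) \<le> \<eta> / 4 / b" using dw by (simp add: dist_norm norm_minus_commute b_def)
      have pert: "cmod (w - w0) * cmod (a u) \<le> \<eta> / 4" if "norm u = 1" for u
      proof -
        have "cmod (w - w0) * cmod (a u) \<le> (\<eta> / 4 / b) * b"
          using dw' a_bound[OF that] b e unfolding a_def by (intro mult_mono) auto
        also have "\<dots> = \<eta> / 4" using b by simp
        finally show ?thesis .
      qed
      have 1: "Re (w * a y) - Re (w0 * a y) \<le> \<eta> / 4"
        using Re_diff_le[of w "a y" w0] pert[OF y] by (simp add: mult.commute)
      have 2: "Re (w0 * a x) - Re (w * a x) \<le> \<eta> / 4"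
        using Re_diff_le[of w0 "a x" w] pert[OF x(2)] by (simp add: mult.commute norm_minus_commute)
      show "Re (w * a y) - \<eta> \<le> Re (w * a x)"
        using 1 2 sup[OF y] gx ys(2) unfolding g_def by linarith
    qed
    then show "\<exists>x\<in>range (P n). norm x = 1 \<and>
     (\<forall>(y::'a) w. norm y = 1 \<longrightarrow> dist w0 w < \<eta> / 4 / (K + 1) \<longrightarrow>
        Re (w * cinner (S y) y) - \<eta> \<le> Re (w * cinner (S x) x))"
      using x unfolding a_def by blast
  qed
qed


lemma norm_Lz_sq:
  assumes "norm u = 1"
  shows "(norm (S u - z *\<^sub>C u))^2 = (norm (S u))^2 + (cmod z)^2 - 2 * Re (z * cinner (S u) u)"
  using norm_diff_sq[of "S u" "z *\<^sub>C u"] assms by (simp add: norm_scaleC cinner_scaleC_right)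

lemma U:
  assumes d: "\<delta> > 0"
  shows "\<exists>N. \<forall>n\<ge>N. \<forall>z (y::'a). norm y = 1 \<longrightarrow>
     (\<exists>x\<in>range (P n). norm x = 1 \<and> norm (S x - z *\<^sub>C x) \<le> norm (S y - z *\<^sub>C y) + \<delta>)"
proof -
  define R where "R = 2 * K + 1 + 2 * K^2 / \<delta>"
  define \<eta> where "\<eta> = \<delta> / 4"
  have eta: "\<eta> > 0" using d by (simp add: \<eta>_def)
  define \<rho> where "\<rho> = \<eta> / 4 / (K + 1)"
  have rho: "\<rho> > 0" using eta K_nonneg by (simp add: \<rho>_def)
  have E1: "eventually (\<lambda>n. \<forall>z\<in>cball 0 R. \<exists>c\<in>cball 0 R. dist c z < \<delta> / 4 \<and>
      (\<exists>x\<in>range (P n). norm x = 1 \<and>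
      (\<forall>(y::'a) z. norm y = 1 \<longrightarrow> dist c z < \<delta> / 4 \<longrightarrow> norm (S x - z *\<^sub>C x) \<le> norm (S y - z *\<^sub>C y) + \<delta>))) sequentially"
    by (rule cover_eventually[OF compact_cball]) (use d Pt1[OF d] in auto)
  have E2: "eventually (\<lambda>n. \<forall>w\<in>sphere 0 1. \<exists>c\<in>sphere 0 1. dist c w < \<rho> \<and>
      (\<exists>x\<in>range (P n). norm x = 1 \<and>
     (\<forall>(y::'a) w. norm y = 1 \<longrightarrow> dist c w < \<eta> / 4 / (K + 1) \<longrightarrow>
        Re (w * cinner (S y) y) - \<eta> \<le> Re (w * cinner (S x) x)))) sequentially"
    by (rule cover_eventually[OF compact_sphere rho]) (rule Pt2[OF _ eta], simp)
  obtain N where N: "\<And>n. n \<ge> N \<Longrightarrow> (\<forall>z\<in>cball 0 R. \<exists>c\<in>cball 0 R. dist c z < \<delta> / 4 \<and>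
      (\<exists>x\<in>range (P n). norm x = 1 \<and>
      (\<forall>(y::'a) z. norm y = 1 \<longrightarrow> dist c z < \<delta> / 4 \<longrightarrow> norm (S x - z *\<^sub>C x) \<le> norm (S y - z *\<^sub>C y) + \<delta>)))
      \<and> (\<forall>w\<in>sphere 0 1. \<exists>c\<in>sphere 0 1. dist c w < \<rho> \<and>
      (\<exists>x\<in>range (P n). norm x = 1 \<and>
     (\<forall>(y::'a) w. norm y = 1 \<longrightarrow> dist c w < \<eta> / 4 / (K + 1) \<longrightarrow>
        Re (w * cinner (S y) y) - \<eta> \<le> Re (w * cinner (S x) x))))"
    using eventually_conj[OF E1 E2] unfolding eventually_sequentially by blast
  show ?thesis
  proof (intro exI allI impI)
    fix n z and y :: 'a assume n: "n \<ge> N" and y: "norm y = 1"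
    show "\<exists>x\<in>range (P n). norm x = 1 \<and> norm (S x - z *\<^sub>C x) \<le> norm (S y - z *\<^sub>C y) + \<delta>"
    proof (cases "cmod z \<le> R")
      case True
      then have "z \<in> cball 0 R" by simp
      then obtain c x where "dist c z < \<delta> / 4" "x \<in> range (P n)" "norm x = 1"
        "\<forall>(y::'a) z. norm y = 1 \<longrightarrow> dist c z < \<delta> / 4 \<longrightarrow> norm (S x - z *\<^sub>C x) \<le> norm (S y - z *\<^sub>C y) + \<delta>"
        using N[OF n] by blast
      then show ?thesis using y by blast
    next
      case False
      define r where "r = cmod z"
      have rR: "r > R" using False by (simp add: r_def)
      have q0: "2 * K^2 / \<delta> \<ge> 0" using d by simp
      have r0: "r > 0" using rR K_nonneg q0 unfolding R_def by linarith
      define w where "w = z / complex_of_real r"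
      have zw: "z = complex_of_real r * w" using r0 by (simp add: w_def)
      have "w \<in> sphere 0 1" using r0 by (simp add: w_def r_def norm_divide)
      then obtain c x where x: "x \<in> range (P n)" "norm x = 1" and dc: "dist c w < \<rho>"
        and c: "\<forall>(y::'a) w. norm y = 1 \<longrightarrow> dist c w < \<eta> / 4 / (K + 1) \<longrightarrow>
           Re (w * cinner (S y) y) - \<eta> \<le> Re (w * cinner (S x) x)"
        using N[OF n] by blast
      have key: "Re (w * cinner (S y) y) - \<eta> \<le> Re (w * cinner (S x) x)"
        using c y dc unfolding \<rho>_def by blast
      have Rez: "Re (z * q) = r * Re (w * q)" for q
        unfolding zw by (simp add: mult.assoc)
      define A where "A = norm (S y - z *\<^sub>C y)"
      define X where "X = norm (S x - z *\<^sub>C x)"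
      have X2: "X^2 = (norm (S x))^2 + r^2 - 2 * (r * Re (w * cinner (S x) x))"
        by (simp only: X_def norm_Lz_sq[OF x(2)] Rez r_def)
      have A2: "A^2 = (norm (S y))^2 + r^2 - 2 * (r * Re (w * cinner (S y) y))"
        by (simp only: A_def norm_Lz_sq[OF y] Rez r_def)
      have Sx: "(norm (S x))^2 \<le> K^2"
        using Sb[of x] x(2) norm_ge_zero by (simp add: power_mono)
      have rk: "r * (Re (w * cinner (S y) y) - \<eta>) \<le> r * Re (w * cinner (S x) x)"
        using key r0 by (intro mult_left_mono) auto
      have rk': "r * Re (w * cinner (S y) y) - r * \<eta> \<le> r * Re (w * cinner (S x) x)"
        using rk by (simp add: right_diff_distrib)
      have X2A: "X^2 \<le> A^2 + K^2 + 2 * (r * \<eta>)"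
        using X2 A2 Sx rk' zero_le_power2[of "norm (S y)"] by linarith
      have Ar: "A \<ge> r - K"
      proof -
        have "norm (z *\<^sub>C y) - norm (S y) \<le> norm (z *\<^sub>C y - S y)" by (rule norm_triangle_ineq2)
        then show ?thesis using Sb[of y] y by (simp add: A_def norm_scaleC r_def norm_minus_commute)
      qed
      have r2K: "r \<ge> 2 * K" using rR K_nonneg q0 unfolding R_def by linarith
      have rK2: "2 * K^2 \<le> r * \<delta>"
      proof -
        have "2 * K^2 / \<delta> \<le> r" using rR K_nonneg unfolding R_def by simp
        then show ?thesis using d by (simp add: divide_le_eq)
      qed
      have A0: "A \<ge> r / 2" using Ar r2K by simp
      have c1: "A^2 + K^2 + 2 * (r * \<eta>) \<le> A^2 + r * \<delta>"
      proof -
        have "2 * (r * \<eta>) = r * \<delta> / 2" by (simp add: \<eta>_def)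
        then show ?thesis using rK2 by linarith
      qed
      have c2: "r * \<delta> \<le> 2 * A * \<delta>" using A0 d by (intro mult_right_mono) auto
      have c3: "(A + \<delta>)^2 = A^2 + 2 * A * \<delta> + \<delta>^2" by (simp add: power2_sum)
      have "X^2 \<le> (A + \<delta>)^2" using X2A c1 c2 c3 zero_le_power2[of \<delta>] by linarith
      then have "X \<le> A + \<delta>" by (rule power2_le_imp_le) (use A0 r0 d in simp)
      then show ?thesis using x unfolding X_def A_def by blast
    qed
  qed
qed

end


lemma unit_scale:
  fixes L :: "'a::complex_inner \<Rightarrow> 'a"
  assumes L: "bounded_linear L" and c: "\<And>u. norm u = 1 \<Longrightarrow> c \<le> norm (L u)"
  shows "c * norm x \<le> norm (L x)"
proof (cases "x = 0")
  case True then show ?thesis by simp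
next
  case False
  define u where "u = (1 / norm x) *\<^sub>R x"
  have nu: "norm u = 1" using False by (simp add: u_def)
  have "L u = (1 / norm x) *\<^sub>R L x"
    unfolding u_def by (rule linear_scale[OF bounded_linear.linear[OF L]])
  then have "norm (L u) = norm (L x) / norm x" by simp
  then have "c \<le> norm (L x) / norm x" using c[OF nu] by simp
  then show ?thesis using False by (simp add: field_simps)
qed

lemma case_qt:
  fixes T :: "'a::chilbert_space \<Rightarrow> 'a" and P :: "nat \<Rightarrow> 'a \<Rightarrow> 'a"
  assumes T: "bounded_clinear T" and filt: "filtration P"
    and eps: "(\<lambda>n. onorm (offdiag (P n) T)) \<longlonglongrightarrow> 0"
  shows "uniform_limit UNIV (\<lambda>n. Psi_on (range (P n)) (\<lambda>x. P n (T x))) (Psi T) sequentially"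
proof (cases "\<forall>x::'a. x = 0")
  case True
  have "range (P n) = UNIV" for n using True by (metis UNIV_eq_I rangeI)
  moreover have "(\<lambda>x. P n (T x)) = T" for n using True by (metis ext)
  ultimately have "(\<lambda>n. Psi_on (range (P n)) (\<lambda>x. P n (T x))) = (\<lambda>n. Psi T)" by simp
  then show ?thesis by (simp add: uniform_limit_const)
next
  case False
  then obtain x0 :: 'a where x0: "x0 \<noteq> 0" by blast
  have Tbl: "bounded_linear T" by (rule bcl_bl[OF T])
  show ?thesis
  proof (rule uniform_limitI)
    fix e :: real assume e: "e > 0"
    define \<delta> where "\<delta> = e / 2"
    have d: "\<delta> > 0" using e by (simp add: \<delta>_def)
    obtain N1 where N1': "\<forall>n\<ge>N1. norm (onorm (offdiag (P n) T) - 0) < \<delta>"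
      using LIMSEQ_D[OF eps d] by auto
    have N1: "onorm (offdiag (P n) T) < \<delta>" if "n \<ge> N1" for n
      using N1'[rule_format, OF that] abs_ge_self[of "onorm (offdiag (P n) T)"] by (simp only: diff_zero real_norm_def)
    have d2: "\<delta> / 2 > 0" using d by simp
    obtain N2 where N2: "\<And>n z (y::'a). n \<ge> N2 \<Longrightarrow> norm y = 1 \<Longrightarrow>
       (\<exists>x\<in>range (P n). norm x = 1 \<and> norm (T x - z *\<^sub>C x) \<le> norm (T y - z *\<^sub>C y) + \<delta> / 2)"
      using U[OF filt Tbl x0 d2] by blast
    have "eventually (\<lambda>n. dist (P n x0) x0 < norm x0) sequentially"
      using filt_conv[OF filt, of x0] x0 by (intro tendstoD) auto
    then obtain N3 where N3: "\<And>n. n \<ge> N3 \<Longrightarrow> dist (P n x0) x0 < norm x0"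
      unfolding eventually_sequentially by blast
    show "\<forall>\<^sub>F n in sequentially. \<forall>z\<in>UNIV. dist (Psi_on (range (P n)) (\<lambda>x. P n (T x)) z) (Psi T z) < e"
      unfolding eventually_sequentially
    proof (intro exI[of _ "max N1 (max N2 N3)"] allI impI ballI)
      fix n z assume n: "max N1 (max N2 N3) \<le> n"
      have n1: "n \<ge> N1" and n2: "n \<ge> N2" and n3: "n \<ge> N3" using n by auto
      have op: "is_orth_proj (P n)" by (rule filt_op[OF filt])
      have fr: "finite_rank (P n)" by (rule filt_fr[OF filt])
      have ne: "P n x0 \<noteq> 0" using N3[OF n3] by (auto simp: dist_norm)
      have neM: "P n x0 \<in> range (P n)" by simp
      define \<psi> where "\<psi> = Psi T z"
      define \<phi> where "\<phi> = Psi_on (range (P n)) (\<lambda>x. P n (T x)) z"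
      have \<phi>0: "\<phi> \<ge> 0" unfolding \<phi>_def by (rule Psi_nonneg[OF neM ne])
      have \<psi>0: "\<psi> \<ge> 0" unfolding \<psi>_def by (rule Psi_nonneg[OF UNIV_I x0])
      have lower: "\<phi> \<ge> \<psi> - \<delta>"
      proof (cases "\<psi> \<le> \<delta>")
        case True then show ?thesis using \<phi>0 by linarith
      next
        case False
        then have \<psi>p: "\<psi> > 0" using d by linarith
        have bbT: "\<psi> * norm x \<le> norm (T x - z *\<^sub>C x)" for x
          by (rule Psi_lower_bb[OF \<psi>p _ UNIV_I UNIV_I]) (simp add: \<psi>_def)
        have "Psi_on (range (P n)) (\<lambda>x. P n (T x)) z \<ge> \<psi> - \<delta>"
        proof (rule section_lower[OF op fr T _ neM ne])
          show "\<psi> - \<delta> > 0" using False by linarith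
          fix x assume x: "x \<in> range (P n)"
          have e: "P n (T x) - z *\<^sub>C x = (T x - z *\<^sub>C x) - (T x - P n (T x))" by simp
          have "norm (T x - P n (T x)) \<le> onorm (offdiag (P n) T) * norm x"
            by (rule offdiag_bound[OF op Tbl x])
          also have "\<dots> \<le> \<delta> * norm x" using N1[OF n1] by (intro mult_right_mono) auto
          finally have "norm (T x - P n (T x)) \<le> \<delta> * norm x" .
          moreover have "norm (T x - z *\<^sub>C x) - norm (T x - P n (T x)) \<le> norm (P n (T x) - z *\<^sub>C x)"
            unfolding e by (rule norm_triangle_ineq2)
          ultimately show "(\<psi> - \<delta>) * norm x \<le> norm (P n (T x) - z *\<^sub>C x)"
            using bbT[of x] by (simp add: left_diff_distrib)
        qed
        then show ?thesis by (simp add: \<phi>_def)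
      qed
      have upper: "\<phi> \<le> \<psi> + \<delta>"
      proof -
        obtain y :: 'a where y: "norm y = 1" "norm (T y - z *\<^sub>C y) \<le> \<psi> + \<delta> / 2"
        proof (rule ccontr)
          assume "\<not> thesis"
          then have nb: "\<And>u. norm u = 1 \<Longrightarrow> \<psi> + \<delta> / 2 \<le> norm (T u - z *\<^sub>C u)"
            using that by force
          have "\<psi> + \<delta> / 2 \<le> Psi T z"
          proof (rule qt_lower[OF T filt eps _ x0])
            show "\<psi> + \<delta> / 2 > 0" using \<psi>0 d by simp
            show "(\<psi> + \<delta> / 2) * norm x \<le> norm (T x - z *\<^sub>C x)" for x
              by (rule unit_scale[OF bl_L[OF Tbl] nb])
          qed
          then show False using d by (simp add: \<psi>_def)
        qed
        obtain x where x: "x \<in> range (P n)" "norm x = 1" "norm (T x - z *\<^sub>C x) \<le> \<psi> + \<delta>"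
          using N2[OF n2 y(1), of z] y(2) by force
        have x0': "x \<noteq> 0" using x(2) by auto
        have "\<phi> \<le> norm (P n (T x) - z *\<^sub>C x) / norm x"
          unfolding \<phi>_def by (rule Psi_upper[OF x(1) x0' section_inv[OF op x(1)]])
        also have "P n (T x) - z *\<^sub>C x = P n (T x - z *\<^sub>C x)"
          using x(1) op_range[OF op] by (simp add: op_diff[OF op] op_scaleC[OF op])
        also have "norm (P n (T x - z *\<^sub>C x)) / norm x \<le> norm (T x - z *\<^sub>C x)"
          using op_norm_le[OF op] x(2) by simp
        finally show ?thesis using x(3) by simp
      qed
      show "dist (Psi_on (range (P n)) (\<lambda>x. P n (T x)) z) (Psi T z) < e"
        using lower upper d unfolding \<phi>_def \<psi>_def \<delta>_def dist_real_def by linarith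
    qed
  qed
qed


section \<open>Closest points and Riesz representation\<close>

lemma parallelogram:
  "(norm (a + b::'a::complex_inner))^2 + (norm (a - b))^2 = 2 * (norm a)^2 + 2 * (norm b)^2"
  by (simp add: norm_add_sq norm_diff_sq)

lemma orth_from_min:
  fixes e k' :: "'a::complex_inner"
  assumes min: "\<And>t. (norm e)^2 \<le> (norm (e - t *\<^sub>C k'))^2"
  shows "cinner e k' = 0"
proof (cases "k' = 0")
  case True then show ?thesis by simp
next
  case False
  define a where "a = cinner e k'"
  define n where "n = (norm k')^2"
  have n: "n > 0" using False by (simp add: n_def)
  define t where "t = cnj a / complex_of_real n"
  have "(norm e)^2 \<le> (norm (e - t *\<^sub>C k'))^2" by (rule min)
  also have "\<dots> = (norm e)^2 + (cmod t)^2 * n - 2 * Re (t * a)"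
    by (simp add: norm_diff_sq norm_scaleC cinner_scaleC_right power_mult_distrib a_def n_def)
  also have "t * a = complex_of_real ((cmod a)^2 / n)"
  proof -
    have e: "cnj a * a = complex_of_real ((cmod a)^2)"
      using complex_norm_square[of a] by (simp only: mult.commute)
    show ?thesis unfolding t_def using e by (metis of_real_divide times_divide_eq_left)
  qed
  also have "(cmod t)^2 * n = (cmod a)^2 / n"
    unfolding t_def using n by (simp add: norm_divide power_divide complex_mod_cnj power2_eq_square)
  finally have "(cmod a)^2 / n \<le> 0" by simp
  then have "(cmod a)^2 \<le> 0" using n by (simp add: divide_le_0_iff)
  then show ?thesis unfolding a_def by simp
qed

lemma closest_point:
  fixes K :: "'a::chilbert_space set"
  assumes cl: "closed K" and K0: "0 \<in> K"
    and Kadd: "\<And>x y. x \<in> K \<Longrightarrow> y \<in> K \<Longrightarrow> x + y \<in> K"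
    and Ksc: "\<And>c x. x \<in> K \<Longrightarrow> c *\<^sub>C x \<in> K"
  shows "\<exists>k\<in>K. \<forall>k'\<in>K. cinner (u - k) k' = 0"
proof -
  define D where "D = (\<lambda>k. (norm (u - k))^2) ` K"
  have Dne: "D \<noteq> {}" using K0 unfolding D_def by blast
  have Dbdd: "bdd_below D" unfolding D_def by (rule bdd_belowI2[where m=0]) simp
  define d where "d = Inf D"
  have dle: "d \<le> (norm (u - k))^2" if "k \<in> K" for k
    unfolding d_def using Dbdd that by (intro cInf_lower) (auto simp: D_def)
  have ex: "\<exists>k. k \<in> K \<and> (norm (u - k))^2 < d + 1 / (real n + 1)" for n
  proof -
    have "Inf D < d + 1 / (real n + 1)" by (simp add: d_def)
    then obtain v where "v \<in> D" "v < d + 1 / (real n + 1)" using cInf_less_iff[OF Dne Dbdd] by blast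
    then show ?thesis unfolding D_def by blast
  qed
  define ks where "ks n = (SOME k. k \<in> K \<and> (norm (u - k))^2 < d + 1 / (real n + 1))" for n
  have ks: "ks n \<in> K" "(norm (u - ks n))^2 < d + 1 / (real n + 1)" for n
    using someI_ex[OF ex[of n]] unfolding ks_def by blast+
  have half: "(1/2::complex) *\<^sub>C (ks n + ks m) \<in> K" for n m
    using Ksc Kadd ks(1) by blast
  have dist_sq: "(norm (ks n - ks m))^2 \<le> 2 / (real n + 1) + 2 / (real m + 1)" for n m
  proof -
    define mid where "mid = (1/2::complex) *\<^sub>C (ks n + ks m)"
    have "(u - ks n) + (u - ks m) = 2 *\<^sub>R (u - mid)"
    proof -
      have "2 *\<^sub>R mid = ks n + ks m"
        unfolding mid_def by (simp add: scaleR_scaleC scaleC_scaleC scaleC_one)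
      then show ?thesis by (simp add: algebra_simps scaleR_2)
    qed
    then have "(norm ((u - ks n) + (u - ks m)))^2 = 4 * (norm (u - mid))^2"
      by (simp add: power_mult_distrib)
    moreover have "d \<le> (norm (u - mid))^2" using dle half unfolding mid_def by blast
    moreover have "(u - ks n) - (u - ks m) = ks m - ks n" by simp
    ultimately have "(norm (ks m - ks n))^2 \<le> 2 * (norm (u - ks n))^2 + 2 * (norm (u - ks m))^2 - 4 * d"
      using parallelogram[of "u - ks n" "u - ks m"] by simp
    also have "\<dots> \<le> 2 / (real n + 1) + 2 / (real m + 1)" using ks(2)[of n] ks(2)[of m] by simp
    finally show ?thesis by (simp add: norm_minus_commute)
  qed
  have "Cauchy ks"
  proof (rule CauchyI)
    fix e :: real assume e: "e > 0"
    obtain N :: nat where N: "4 / e^2 < real N" using reals_Archimedean2 by blast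
    have e2: "e^2 > 0" using e by simp
    show "\<exists>M. \<forall>m\<ge>M. \<forall>n\<ge>M. norm (ks m - ks n) < e"
    proof (intro exI allI impI)
      fix m n assume m: "m \<ge> N" and n: "n \<ge> N"
      have "2 / (real m + 1) \<le> 2 / (real N + 1)" using m by (intro divide_left_mono) auto
      moreover have "2 / (real n + 1) \<le> 2 / (real N + 1)" using n by (intro divide_left_mono) auto
      moreover have "4 / (real N + 1) < e^2"
      proof -
        have "4 < e^2 * real N" using N e2 by (simp add: divide_less_eq mult.commute)
        also have "\<dots> \<le> e^2 * (real N + 1)" using e2 by simp
        finally show ?thesis by (simp add: divide_less_eq mult.commute)
      qed
      ultimately have "(norm (ks m - ks n))^2 < e^2" using dist_sq[of m n] by simp
      then show "norm (ks m - ks n) < e" using e by (simp add: power_less_imp_less_base)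
    qed
  qed
  then obtain k where k: "ks \<longlonglongrightarrow> k" using Cauchy_convergent_iff convergent_def by blast
  have kK: "k \<in> K" by (rule closed_sequentially[OF cl ks(1) k])
  have kmin: "(norm (u - k))^2 \<le> (norm (u - k'))^2" if k': "k' \<in> K" for k'
  proof -
    have l1: "(\<lambda>n. (norm (u - ks n))^2) \<longlonglongrightarrow> (norm (u - k))^2"
      by (intro tendsto_intros k)
    have l2: "(\<lambda>n. d + 1 / (real n + 1)) \<longlonglongrightarrow> d"
      using LIMSEQ_inverse_real_of_nat_add[of d] by (simp add: inverse_eq_divide add.commute)
    have "(norm (u - k))^2 \<le> d"
      by (rule tendsto_le[OF trivial_limit_sequentially l2 l1]) (rule always_eventually, use ks(2) less_imp_le in blast)
    then show ?thesis using dle[OF k'] by linarith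
  qed
  show ?thesis
  proof (intro bexI[OF _ kK] ballI)
    fix k' assume k': "k' \<in> K"
    show "cinner (u - k) k' = 0"
    proof (rule orth_from_min)
      fix t
      have "k + t *\<^sub>C k' \<in> K" using Kadd kK Ksc k' by blast
      then have "(norm (u - k))^2 \<le> (norm (u - (k + t *\<^sub>C k')))^2" by (rule kmin)
      then show "(norm (u - k))^2 \<le> (norm (u - k - t *\<^sub>C k'))^2" by (simp add: algebra_simps)
    qed
  qed
qed


lemma cinner_ext: "(\<And>x. cinner x a = cinner x (b::'a::complex_inner)) \<Longrightarrow> a = b"
proof -
  assume h: "\<And>x. cinner x a = cinner x b"
  have "cinner (a - b) (a - b) = 0" using h[of "a - b"] by (simp add: cinner_diff_right)
  then have "(norm (a - b))^2 = 0" by (simp add: cinner_self_norm)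
  then show "a = b" by simp
qed

lemma riesz:
  fixes f :: "'a::chilbert_space \<Rightarrow> complex"
  assumes bl: "bounded_linear f" and hom: "\<And>c x. f (c *\<^sub>C x) = c * f x"
  shows "\<exists>v. \<forall>x. f x = cinner v x"
proof (cases "\<forall>x. f x = 0")
  case True then show ?thesis by (intro exI[of _ 0]) simp
next
  case False
  then obtain u0 where u0: "f u0 \<noteq> 0" by blast
  define K where "K = {x. f x = 0}"
  have lin: "linear f" by (rule bounded_linear.linear[OF bl])
  have cl: "closed K" unfolding K_def
    by (intro closed_Collect_eq continuous_on_const linear_continuous_on bl)
  have "\<exists>k\<in>K. \<forall>k'\<in>K. cinner (u0 - k) k' = 0"
  proof (rule closest_point[OF cl])
    show "0 \<in> K" by (simp add: K_def linear_0[OF lin])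
    show "x + y \<in> K" if "x \<in> K" "y \<in> K" for x y using that by (simp add: K_def linear_add[OF lin])
    show "c *\<^sub>C x \<in> K" if "x \<in> K" for c x using that by (simp add: K_def hom)
  qed
  then obtain k where k: "k \<in> K" "\<And>k'. k' \<in> K \<Longrightarrow> cinner (u0 - k) k' = 0" by blast
  define e where "e = u0 - k"
  have fe: "f e = f u0" using k(1) by (simp add: e_def K_def linear_diff[OF lin])
  have e0: "e \<noteq> 0" using fe u0 linear_0[OF lin] by auto
  define v where "v = (cnj (f e) / complex_of_real ((norm e)^2)) *\<^sub>C e"
  show ?thesis
  proof (intro exI allI)
    fix x
    define q where "q = f x / f e"
    have "f (x - q *\<^sub>C e) = 0" using u0 fe by (simp add: q_def linear_diff[OF lin] hom)
    then have "cinner e (x - q *\<^sub>C e) = 0" using k(2) unfolding K_def e_def by blast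
    then have ex: "cinner e x = q * complex_of_real ((norm e)^2)"
      by (simp add: cinner_diff_right cinner_scaleC_right cinner_self_norm)
    have n0: "complex_of_real ((norm e)^2) \<noteq> 0" using e0 by simp
    have "cinner v x = f e / complex_of_real ((norm e)^2) * cinner e x"
      by (simp add: v_def cinner_scaleC_left)
    also have "\<dots> = f x" using n0 u0 fe by (simp add: ex q_def)
    finally show "f x = cinner v x" by simp
  qed
qed

lemma adj_prop:
  fixes T :: "'a::chilbert_space \<Rightarrow> 'a"
  assumes T: "bounded_clinear T"
  shows "cinner (T x) y = cinner x (adj T y)"
proof -
  have Tbl: "bounded_linear T" by (rule bcl_bl[OF T])
  have ex: "\<exists>z. \<forall>x. cinner (T x) y = cinner x z"
  proof -
    define g where "g x = cinner y (T x)" for x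
    have "bounded_linear g"
    proof (rule bounded_linear_intro[where K="norm y * onorm T"])
      show "g (a + b) = g a + g b" for a b
        by (simp add: g_def linear_add[OF bounded_linear.linear[OF Tbl]] cinner_add_right)
      show "g (r *\<^sub>R a) = r *\<^sub>R g a" for r a
        by (simp add: g_def linear_scale[OF bounded_linear.linear[OF Tbl]] cinner_scaleR_right scaleR_conv_of_real)
      show "norm (g a) \<le> norm a * (norm y * onorm T)" for a
      proof -
        have "norm (g a) \<le> norm y * norm (T a)" unfolding g_def by (rule cinner_Cauchy_Schwarz)
        also have "\<dots> \<le> norm y * (onorm T * norm a)" by (intro mult_left_mono onorm[OF Tbl]) simp
        finally show ?thesis by (simp add: algebra_simps)
      qed
    qed
    moreover have "g (c *\<^sub>C a) = c * g a" for c a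
      by (simp add: g_def bcl_scaleC[OF T] cinner_scaleC_right)
    ultimately obtain v where v: "\<And>x. g x = cinner v x" using riesz by blast
    have "cinner (T x) y = cinner x v" for x
      using v[of x] unfolding g_def by (metis cinner_commute)
    then show ?thesis by blast
  qed
  have uniq: "z1 = z2" if "\<forall>x. cinner (T x) y = cinner x z1" "\<forall>x. cinner (T x) y = cinner x z2" for z1 z2
    using that by (intro cinner_ext) simp
  obtain z0 where z0: "\<forall>x. cinner (T x) y = cinner x z0" using ex by blast
  have "\<exists>!z. \<forall>x. cinner (T x) y = cinner x z"
  proof (rule ex1I[of _ z0])
    show "\<forall>x. cinner (T x) y = cinner x z0" by (rule z0)
    show "z = z0" if "\<forall>x. cinner (T x) y = cinner x z" for z using uniq[OF that z0] .
  qed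
  then have "\<forall>x. cinner (T x) y = cinner x (adj T y)"
    unfolding adj_def by (rule theI')
  then show ?thesis by blast
qed


lemma cinner_ext_left: "(\<And>u. cinner a u = cinner (b::'a::complex_inner) u) \<Longrightarrow> a = b"
  by (rule cinner_ext) (metis cinner_commute)

lemma adj_bcl:
  fixes T :: "'a::chilbert_space \<Rightarrow> 'a"
  assumes T: "bounded_clinear T"
  shows "bounded_clinear (adj T)"
proof -
  define S where "S = adj T"
  have ap: "cinner (T x) y = cinner x (S y)" for x y unfolding S_def by (rule adj_prop[OF T])
  have Tbl: "bounded_linear T" by (rule bcl_bl[OF T])
  have add: "S (a + b) = S a + S b" for a b
    by (rule cinner_ext) (simp add: ap[symmetric] cinner_add_right)
  have sc: "S (c *\<^sub>C a) = c *\<^sub>C S a" for c a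
    by (rule cinner_ext) (simp add: ap[symmetric] cinner_scaleC_right)
  have bd: "norm (S a) \<le> norm a * onorm T" for a
  proof (cases "S a = 0")
    case True then show ?thesis using onorm_pos_le[OF Tbl] by simp
  next
    case False
    have "(norm (S a))^2 = Re (cinner (S a) (S a))" by (simp add: Re_cinner_self)
    also have "\<dots> = Re (cinner (T (S a)) a)" by (simp add: ap)
    also have "\<dots> \<le> cmod (cinner (T (S a)) a)" by (rule complex_Re_le_cmod)
    also have "\<dots> \<le> norm (T (S a)) * norm a" by (rule cinner_Cauchy_Schwarz)
    also have "\<dots> \<le> onorm T * norm (S a) * norm a" by (intro mult_right_mono onorm[OF Tbl]) simp
    finally have "norm (S a) * norm (S a) \<le> (norm a * onorm T) * norm (S a)"
      by (simp add: power2_eq_square algebra_simps)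
    then show ?thesis using False by simp
  qed
  have "bounded_linear S"
    by (rule bounded_linear_intro[where K="onorm T"]) (simp_all add: add bd scaleR_scaleC sc)
  then show ?thesis unfolding bounded_clinear_def S_def using sc S_def by blast
qed

lemma Psi_res:
  fixes A :: "'a::complex_inner \<Rightarrow> 'a"
  assumes c: "c > 0" and P: "Psi_on M A z \<ge> c"
    and inv: "\<And>x. x \<in> M \<Longrightarrow> A x - z *\<^sub>C x \<in> M"
  shows "\<exists>B. resolvent_on M A z B \<and> (\<forall>w\<in>M. c * norm (B w) \<le> norm w)"
proof -
  have nsp: "z \<notin> spectrum_on M A" using c P by (auto simp: Psi_on_def)
  then obtain B where rB: "resolvent_on M A z B" unfolding spectrum_on_def by blast
  have "c * norm (B w) \<le> norm w" if w: "w \<in> M" for w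
  proof -
    have Bw: "B w \<in> M" "A (B w) - z *\<^sub>C B w = w" using rB w unfolding resolvent_on_def by blast+
    show ?thesis using Psi_lower_bb[OF c P Bw(1) inv[OF Bw(1)]] Bw(2) by simp
  qed
  then show ?thesis using rB by blast
qed

lemma trick_bb:
  fixes A A' :: "'a::complex_inner \<Rightarrow> 'a"
  assumes c: "c > 0" and P: "Psi_on M A z \<ge> c"
    and inv: "\<And>x. x \<in> M \<Longrightarrow> A x - z *\<^sub>C x \<in> M"
    and adj: "\<And>x y. x \<in> M \<Longrightarrow> y \<in> M \<Longrightarrow> cinner (A x - z *\<^sub>C x) y = cinner x (A' y)"
    and w: "w \<in> M"
  shows "c * norm w \<le> norm (A' w)"
proof -
  obtain B where rB: "resolvent_on M A z B" and Bb: "\<And>w. w \<in> M \<Longrightarrow> c * norm (B w) \<le> norm w"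
    using Psi_res[OF c P inv] by blast
  have "norm w \<le> inverse c * norm (A' w)"
  proof (rule adjoint_trick[where A="\<lambda>x. A x - z *\<^sub>C x" and B=B and M=M])
    show "cinner (A x - z *\<^sub>C x) y = cinner x (A' y)" if "x \<in> M" "y \<in> M" for x y by (rule adj[OF that])
    show "B u \<in> M \<and> A (B u) - z *\<^sub>C B u = u \<and> norm (B u) \<le> inverse c * norm u" if "u \<in> M" for u
      using rB that Bb[OF that] c unfolding resolvent_on_def by (auto simp: field_simps)
    show "w \<in> M" by (rule w)
    show "inverse c \<ge> 0" using c by simp
  qed
  then show ?thesis using c by (simp add: field_simps)
qed


lemma case_adj:
  fixes T :: "'a::chilbert_space \<Rightarrow> 'a" and P :: "nat \<Rightarrow> 'a \<Rightarrow> 'a"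
  assumes T: "bounded_clinear T" and filt: "filtration P"
    and eps: "(\<lambda>n. onorm (offdiag (P n) (adj T))) \<longlonglongrightarrow> 0"
  shows "uniform_limit UNIV (\<lambda>n. Psi_on (range (P n)) (\<lambda>x. P n (T x))) (Psi T) sequentially"
proof (cases "\<forall>x::'a. x = 0")
  case True
  have "range (P n) = UNIV" for n using True by (metis UNIV_eq_I rangeI)
  moreover have "(\<lambda>x. P n (T x)) = T" for n using True by (metis ext)
  ultimately have "(\<lambda>n. Psi_on (range (P n)) (\<lambda>x. P n (T x))) = (\<lambda>n. Psi T)" by simp
  then show ?thesis by (simp add: uniform_limit_const)
next
  case False
  then obtain x0 :: 'a where x0: "x0 \<noteq> 0" by blast
  define S where "S = adj T"
  have Sc: "bounded_clinear S" unfolding S_def by (rule adj_bcl[OF T])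
  have Tbl: "bounded_linear T" by (rule bcl_bl[OF T])
  have Sbl: "bounded_linear S" by (rule bcl_bl[OF Sc])
  have epsS: "(\<lambda>n. onorm (offdiag (P n) S)) \<longlonglongrightarrow> 0" using eps by (simp add: S_def)
  have ap: "cinner (T x) y = cinner x (S y)" for x y unfolding S_def by (rule adj_prop[OF T])
  have G1: "cinner (T x - z *\<^sub>C x) y = cinner x (S y - cnj z *\<^sub>C y)" for x y z
    by (simp add: cinner_diff_left cinner_diff_right cinner_scaleC_left cinner_scaleC_right ap)
  have G1': "cinner (S x - cnj z *\<^sub>C x) y = cinner x (T y - z *\<^sub>C y)" for x y z
    by (subst (1 2) cinner_commute) (simp add: G1)
  have G2: "cinner (P n (T x) - z *\<^sub>C x) y = cinner x (P n (S y) - cnj z *\<^sub>C y)"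
    if "x \<in> range (P n)" "y \<in> range (P n)" for n x y z
  proof -
    have op: "is_orth_proj (P n)" by (rule filt_op[OF filt])
    have px: "P n x = x" and py: "P n y = y" using that op_range[OF op] by blast+
    have "cinner (P n (T x)) y = cinner x (P n (S y))"
      using op_sa[OF op, of "T x" y] op_sa[OF op, of x "S y"] ap[of x y] px py by simp
    then show ?thesis by (simp add: cinner_diff_left cinner_diff_right cinner_scaleC_left cinner_scaleC_right)
  qed
  have G2': "cinner (P n (S x) - cnj z *\<^sub>C x) y = cinner x (P n (T y) - z *\<^sub>C y)"
    if "x \<in> range (P n)" "y \<in> range (P n)" for n x y z
    by (subst (1 2) cinner_commute) (simp add: G2[OF that(2,1)])
  show ?thesis
  proof (rule uniform_limitI)
    fix e :: real assume e: "e > 0"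
    define \<delta> where "\<delta> = e / 2"
    have d: "\<delta> > 0" using e by (simp add: \<delta>_def)
    obtain N1 where N1': "\<forall>n\<ge>N1. norm (onorm (offdiag (P n) S) - 0) < \<delta>"
      using LIMSEQ_D[OF epsS d] by auto
    have N1: "onorm (offdiag (P n) S) < \<delta>" if "n \<ge> N1" for n
      using N1'[rule_format, OF that] abs_ge_self[of "onorm (offdiag (P n) S)"] by (simp only: diff_zero real_norm_def)
    have d2: "\<delta> / 2 > 0" using d by simp
    obtain N2 where N2: "\<And>n z (y::'a). n \<ge> N2 \<Longrightarrow> norm y = 1 \<Longrightarrow>
       (\<exists>x\<in>range (P n). norm x = 1 \<and> norm (S x - z *\<^sub>C x) \<le> norm (S y - z *\<^sub>C y) + \<delta> / 2)"
      using U[OF filt Sbl x0 d2] by blast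
    have "eventually (\<lambda>n. dist (P n x0) x0 < norm x0) sequentially"
      using filt_conv[OF filt, of x0] x0 by (intro tendstoD) auto
    then obtain N3 where N3: "\<And>n. n \<ge> N3 \<Longrightarrow> dist (P n x0) x0 < norm x0"
      unfolding eventually_sequentially by blast
    show "\<forall>\<^sub>F n in sequentially. \<forall>z\<in>UNIV. dist (Psi_on (range (P n)) (\<lambda>x. P n (T x)) z) (Psi T z) < e"
      unfolding eventually_sequentially
    proof (intro exI[of _ "max N1 (max N2 N3)"] allI impI ballI)
      fix n z assume n: "max N1 (max N2 N3) \<le> n"
      have n1: "n \<ge> N1" and n2: "n \<ge> N2" and n3: "n \<ge> N3" using n by auto
      have op: "is_orth_proj (P n)" by (rule filt_op[OF filt])
      have fr: "finite_rank (P n)" by (rule filt_fr[OF filt])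
      have ne: "P n x0 \<noteq> 0" using N3[OF n3] by (auto simp: dist_norm)
      have neM: "P n x0 \<in> range (P n)" by simp
      define \<psi> where "\<psi> = Psi T z"
      define \<phi> where "\<phi> = Psi_on (range (P n)) (\<lambda>x. P n (T x)) z"
      have \<phi>0: "\<phi> \<ge> 0" unfolding \<phi>_def by (rule Psi_nonneg[OF neM ne])
      have \<psi>0: "\<psi> \<ge> 0" unfolding \<psi>_def by (rule Psi_nonneg[OF UNIV_I x0])
      have lower: "\<phi> \<ge> \<psi> - \<delta>"
      proof (cases "\<psi> \<le> \<delta>")
        case True then show ?thesis using \<phi>0 by linarith
      next
        case False
        then have \<psi>p: "\<psi> > 0" using d by linarith
        have cp: "\<psi> - \<delta> > 0" using False by linarith
        have bbS: "\<psi> * norm x \<le> norm (S x - cnj z *\<^sub>C x)" for x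
          by (rule trick_bb[where A=T and z=z and M=UNIV, OF \<psi>p _ _ _ UNIV_I]) (simp_all add: \<psi>_def G1)
        have bbSn: "(\<psi> - \<delta>) * norm x \<le> norm (P n (S x) - cnj z *\<^sub>C x)" if x: "x \<in> range (P n)" for x
        proof -
          have e: "P n (S x) - cnj z *\<^sub>C x = (S x - cnj z *\<^sub>C x) - (S x - P n (S x))" by simp
          have "norm (S x - P n (S x)) \<le> onorm (offdiag (P n) S) * norm x"
            by (rule offdiag_bound[OF op Sbl x])
          also have "\<dots> \<le> \<delta> * norm x" using N1[OF n1] by (intro mult_right_mono) auto
          finally have "norm (S x - P n (S x)) \<le> \<delta> * norm x" .
          moreover have "norm (S x - cnj z *\<^sub>C x) - norm (S x - P n (S x)) \<le> norm (P n (S x) - cnj z *\<^sub>C x)"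
            unfolding e by (rule norm_triangle_ineq2)
          ultimately show ?thesis using bbS[of x] by (simp add: left_diff_distrib)
        qed
        have PS: "Psi_on (range (P n)) (\<lambda>x. P n (S x)) (cnj z) \<ge> \<psi> - \<delta>"
          by (rule section_lower[OF op fr Sc cp neM ne bbSn])
        have bbTn: "(\<psi> - \<delta>) * norm x \<le> norm (P n (T x) - z *\<^sub>C x)" if x: "x \<in> range (P n)" for x
          by (rule trick_bb[OF cp PS section_inv[where S=S and w="cnj z", OF op] _ x]) (assumption | rule G2')+
        have "Psi_on (range (P n)) (\<lambda>x. P n (T x)) z \<ge> \<psi> - \<delta>"
          by (rule section_lower[OF op fr T cp neM ne bbTn])
        then show ?thesis by (simp add: \<phi>_def)
      qed
      have upper: "\<phi> \<le> \<psi> + \<delta>"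
      proof -
        obtain y :: 'a where y: "norm y = 1" "norm (S y - cnj z *\<^sub>C y) \<le> \<psi> + \<delta> / 2"
        proof (rule ccontr)
          assume "\<not> thesis"
          then have nb: "\<And>u. norm u = 1 \<Longrightarrow> \<psi> + \<delta> / 2 \<le> norm (S u - cnj z *\<^sub>C u)"
            using that by force
          define c' where "c' = \<psi> + \<delta> / 2"
          have c': "c' > 0" using \<psi>0 d by (simp add: c'_def)
          have PS: "c' \<le> Psi S (cnj z)"
          proof (rule qt_lower[OF Sc filt epsS c' x0])
            show "c' * norm x \<le> norm (S x - cnj z *\<^sub>C x)" for x
              unfolding c'_def by (rule unit_scale[OF bl_L[OF Sbl] nb])
          qed
          have bbT: "c' * norm x \<le> norm (T x - z *\<^sub>C x)" for x
            by (rule trick_bb[OF c' PS _ _ UNIV_I]) (simp_all add: G1')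
          obtain C where rC: "resolvent_on UNIV S (cnj z) C"
            and Cb: "\<And>w. c' * norm (C w) \<le> norm w"
            using Psi_res[OF c' PS] by blast
          have Cadd: "C (a + b) = C a + C b" and Csc: "C (q *\<^sub>C a) = q *\<^sub>C C a"
            and Cinv: "C (S a - cnj z *\<^sub>C a) = a" for a b q
            using rC unfolding resolvent_on_def by blast+
          have surj: "\<exists>x\<in>UNIV. T x - z *\<^sub>C x = y'" for y'
          proof -
            define g where "g u = cinner y' (C u)" for u
            have "bounded_linear g"
            proof (rule bounded_linear_intro[where K="norm y' / c'"])
              show "g (a + b) = g a + g b" for a b by (simp add: g_def Cadd cinner_add_right)
              show "g (r *\<^sub>R a) = r *\<^sub>R g a" for r a
                using Csc[of "complex_of_real r" a]
                by (simp add: g_def scaleR_scaleC cinner_scaleC_right scaleR_conv_of_real)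
              show "norm (g a) \<le> norm a * (norm y' / c')" for a
              proof -
                have "norm (g a) \<le> norm y' * norm (C a)" unfolding g_def by (rule cinner_Cauchy_Schwarz)
                also have "norm (C a) \<le> norm a / c'" using Cb[of a] c' by (simp add: field_simps)
                then have "norm y' * norm (C a) \<le> norm y' * (norm a / c')" by (intro mult_left_mono) auto
                finally show ?thesis by (simp add: mult.commute)
              qed
            qed
            moreover have "g (q *\<^sub>C a) = q * g a" for q a by (simp add: g_def Csc cinner_scaleC_right)
            ultimately obtain v where v: "\<And>u. g u = cinner v u" using riesz by blast
            have "T v - z *\<^sub>C v = y'"
            proof (rule cinner_ext_left)
              fix u
              have "cinner (T v - z *\<^sub>C v) u = cinner v (S u - cnj z *\<^sub>C u)" by (rule G1)
              also have "\<dots> = cinner y' (C (S u - cnj z *\<^sub>C u))" using v[of "S u - cnj z *\<^sub>C u"] by (simp add: g_def)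
              also have "\<dots> = cinner y' u" by (simp add: Cinv)
              finally show "cinner (T v - z *\<^sub>C v) u = cinner y' u" .
            qed
            then show ?thesis by blast
          qed
          have "Psi T z \<ge> c'"
          proof (rule Psi_lower[where ?x0.0=x0])
            show "0 < c'" by (rule c')
            show "x0 \<in> UNIV" by simp
            show "x0 \<noteq> 0" by (rule x0)
          qed (use surj in \<open>auto simp: bbT bcl_scaleC[OF T] linear_add[OF bounded_linear.linear[OF Tbl]]\<close>)
          then show False using d by (simp add: \<psi>_def c'_def)
        qed
        obtain x where x: "x \<in> range (P n)" "norm x = 1" "norm (S x - cnj z *\<^sub>C x) \<le> \<psi> + \<delta>"
          using N2[OF n2 y(1), of "cnj z"] y(2) by force
        have "norm (P n (S x) - cnj z *\<^sub>C x) = norm (P n (S x - cnj z *\<^sub>C x))"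
          using x(1) op_range[OF op] by (simp add: op_diff[OF op] op_scaleC[OF op])
        also have "\<dots> \<le> norm (S x - cnj z *\<^sub>C x)" by (rule op_norm_le[OF op])
        finally have xb: "norm (P n (S x) - cnj z *\<^sub>C x) \<le> \<psi> + \<delta>" using x(3) by simp
        show ?thesis
        proof (cases "\<phi> > 0")
          case False then show ?thesis using \<psi>0 d by linarith
        next
          case True
          have "\<phi> * norm x \<le> norm (P n (S x) - cnj z *\<^sub>C x)"
            by (rule trick_bb[where A="\<lambda>x. P n (T x)" and z=z, OF True _ section_inv[where S=T and w=z, OF op] _ x(1)]) (simp_all add: \<phi>_def G2)
          then show ?thesis using xb x(2) by simp
        qed
      qed
      show "dist (Psi_on (range (P n)) (\<lambda>x. P n (T x)) z) (Psi T z) < e"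
        using lower upper d unfolding \<phi>_def \<psi>_def \<delta>_def dist_real_def by linarith
    qed
  qed
qed


theorem mainTheorem11:
  fixes T :: "'a::chilbert_space \<Rightarrow> 'a" and P :: "nat \<Rightarrow> 'a \<Rightarrow> 'a"
  assumes "separable_space TYPE('a)"
    and "bounded_clinear T"
    and "quasitriangular T \<or> quasitriangular (adj T)"
    and "filtration P"
    and "(quasitriangular T \<and> (\<lambda>n. onorm (offdiag (P n) T)) \<longlonglongrightarrow> 0)
       \<or> (quasitriangular (adj T) \<and> (\<lambda>n. onorm (offdiag (P n) (adj T))) \<longlonglongrightarrow> 0)"
  shows "uniform_limit UNIV (\<lambda>n. Psi_on (range (P n)) (\<lambda>x. P n (T x))) (Psi T) sequentially"
  using assms(5)
proof
  assume "quasitriangular T \<and> (\<lambda>n. onorm (offdiag (P n) T)) \<longlonglongrightarrow> 0"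
  then show ?thesis using case_qt[OF assms(2,4)] by blast
next
  assume "quasitriangular (adj T) \<and> (\<lambda>n. onorm (offdiag (P n) (adj T))) \<longlonglongrightarrow> 0"
  then show ?thesis using case_adj[OF assms(2,4)] by blast
qed

end
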